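(* Let $z_1,\dots,z_k\in\mathbb{C}\setminus\{1\}$. Then: (a) The function $\vec n\mapsto\Psi^{\ell}_{\vec z}(\vec n)$ on $\mathbb{Z}^k$ satisfies $(1-q)\sum_{i=1}^k\nabla^{\mathrm{bwd}}_i\Psi^\ell_{\vec z}=(q-1)(z_1+\cdots+z_k)\Psi^\ell_{\vec z}$ on $\mathbb{Z}^k$ and the backward boundary conditions $\big((\nabla^{\mathrm{bwd}}_i-q\nabla^{\mathrm{bwd}}_{i+1})\Psi^\ell_{\vec z}\big)(\vec n)=0$ whenever $n_i=n_{i+1}$, $1\le i\le k-1$. Consequently, on $\mathbb{W}^k$, $\mathcal{H}^{\mathrm{bwd}}\Psi^\ell_{\vec z}=(q-1)(z_1+\cdots+z_k)\Psi^\ell_{\vec z}$. (b) The function $\Psi^{\mathrm{cfwd}}_{\vec z}(\vec n)=\sum_{\sigma\in S_k}\prod_{1\le B<A\le k}\frac{z_{\sigma(A)}-q^{-1}z_{\sigma(B)}}{z_{\sigma(A)}-z_{\sigma(B)}}\prod_{j=1}^k(1-z_{\sigma(j)})^{n_j}$ on $\mathbb{Z}^k$ satisfies $(1-q)\sum_{i}\nabla^{\mathrm{fwd}}_i\Psi^{\mathrm{cfwd}}_{\vec z}=(q-1)(z_1+\cdots+z_k)\Psi^{\mathrm{cfwd}}_{\vec z}$ and the forward boundary conditions $\big((q\nabla^{\mathrm{fwd}}_i-\nabla^{\mathrm{fwd}}_{i+1})\Psi^{\mathrm{cfwd}}_{\vec z}\big)(\vec n)=0$ whenever $n_i=n_{i+1}$.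 Consequently, on $\mathbb{W}^k$, $\mathcal{H}^{\mathrm{cfwd}}\Psi^{\mathrm{cfwd}}_{\vec z}=(q-1)(\sum_j z_j)\Psi^{\mathrm{cfwd}}_{\vec z}$ and $\mathcal{H}^{\mathrm{fwd}}\Psi^{r}_{\vec z}=(q-1)(\sum_j z_j)\Psi^{r}_{\vec z}$, where $\Psi^r_{\vec z}=C_q^{-1}\Psi^{\mathrm{cfwd}}_{\vec z}$.
   Context: Fix $q\in(0,1)$ and integer $k\ge1$. $\mathbb{W}^k=\{\vec n\in\mathbb{Z}^k:n_1\ge\cdots\ge n_k\}$; $\vec n_i^\pm$ changes the $i$-th coordinate by $\pm1$; $(\nabla^{\mathrm{bwd}}_iu)(\vec n)=u(\vec n_i^-)-u(\vec n)$, $(\nabla^{\mathrm{fwd}}_iu)(\vec n)=u(\vec n_i^+)-u(\vec n)$. For $\vec n\in\mathbb{W}^k$ with $M$ clusters of sizes $c_1,\dots,c_M$ (so $n_1=\cdots=n_{c_1}>n_{c_1+1}=\cdots$) and gaps $g_1=+\infty$, $g_i$ = (value of cluster $i-1$) $-$ (value of cluster $i$): $(c)!_q=\prod_{j=1}^c\frac{1-q^j}{1-q}$, $C_q(\vec n)=(-1)^kq^{-k(k-1)/2}\prod_i(c_i)!_q$; $(\mathcal{H}^{\mathrm{bwd}}f)(\vec n)=\sum_{i=1}^{M}(1-q^{c_i})\big(f(\vec n^{-}_{c_1+\cdots+c_i})-f(\vec n)\big)$; $(\mathcal{H}^{\mathrm{fwd}}f)(\vec n)=\sum_{i=1}^{M}\Big(\big((1-q^{c_{i-1}+1})\mathbf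 1_{g_i=1}+(1-q)\mathbf 1_{g_i>1}\big)f(\vec n^{+}_{c_1+\cdots+c_{i-1}+1})-(1-q^{c_i})f(\vec n)\Big)$ (index $1$ when $i=1$); $\mathcal{H}^{\mathrm{cfwd}}=C_q\mathcal{H}^{\mathrm{fwd}}C_q^{-1}$, i.e. $(\mathcal{H}^{\mathrm{cfwd}}f)(\vec n)=\sum_{i=1}^M(1-q^{c_i})(f(\vec n^+_{c_1+\cdots+c_{i-1}+1})-f(\vec n))$. $\Psi^{\ell}_{\vec z}(\vec n)=\sum_{\sigma\in S_k}\prod_{1\le B<A\le k}\frac{z_{\sigma(A)}-qz_{\sigma(B)}}{z_{\sigma(A)}-z_{\sigma(B)}}\prod_{j=1}^k(1-z_{\sigma(j)})^{-n_j}$. For fixed $\vec n$ these symmetrized expressions are symmetric Laurent polynomials in $1-z_1,\dots,1-z_k$ and are understood as such (so no distinctness of the $z_i$ is needed). *)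

theory Defs
  imports "HOL-Analysis.Analysis"
begin

text \<open>Vectors in Z^k are functions n :: nat => int, of which only the
coordinates 1..k are used; z :: nat => complex likewise (coordinates 1..k).\<close>

definition qfact :: "real \<Rightarrow> nat \<Rightarrow> real" where
  "qfact q c = (\<Prod>j=1..c. (1 - q ^ j) / (1 - q))"

text \<open>The raw symmetrized expression (meaningful when the z_i, i=1..k, are pairwise distinct):
sum over sigma in S_k of prod_{B<A} (z_sA - p z_sB)/(z_sA - z_sB) * prod_j (1 - z_sj)^(e*n_j).\<close>
definition sym_expr :: "nat \<Rightarrow> complex \<Rightarrow> int \<Rightarrow> (nat \<Rightarrow> complex) \<Rightarrow> (nat \<Rightarrow> int) \<Rightarrow> complex" where
  "sym_expr k p e z n =
     (\<Sum>\<sigma> | \<sigma> permutes {1..k}.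
        (\<Prod>(B, A) \<in> {(B, A). 1 \<le> B \<and> B < A \<and> A \<le> k}.
            (z (\<sigma> A) - p * z (\<sigma> B)) / (z (\<sigma> A) - z (\<sigma> B)))
        * (\<Prod>j=1..k. (1 - z (\<sigma> j)) powi (e * n j)))"

definition gen_domain :: "nat \<Rightarrow> (nat \<Rightarrow> complex) \<Rightarrow> (nat \<Rightarrow> complex) set" where
  "gen_domain k z = {w. inj_on w {1..k} \<and> (\<forall>i\<in>{1..k}. w i \<noteq> 1) \<and> (\<forall>i. i \<notin> {1..k} \<longrightarrow> w i = z i)}"

text \<open>The symmetrized expression understood as a (Laurent) polynomial in 1-z_1,...,1-z_k:
its value at any z (with z_i \<noteq> 1) is the limit of the expression through distinct points
(= the value of the polynomial, by continuity).\<close>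
definition Psi_sym :: "nat \<Rightarrow> complex \<Rightarrow> int \<Rightarrow> (nat \<Rightarrow> complex) \<Rightarrow> (nat \<Rightarrow> int) \<Rightarrow> complex" where
  "Psi_sym k p e z n = Lim (at z within gen_domain k z) (\<lambda>w. sym_expr k p e w n)"

definition Psi_l :: "nat \<Rightarrow> real \<Rightarrow> (nat \<Rightarrow> complex) \<Rightarrow> (nat \<Rightarrow> int) \<Rightarrow> complex" where
  "Psi_l k q z = Psi_sym k (of_real q) (-1) z"

definition Psi_cfwd :: "nat \<Rightarrow> real \<Rightarrow> (nat \<Rightarrow> complex) \<Rightarrow> (nat \<Rightarrow> int) \<Rightarrow> complex" where
  "Psi_cfwd k q z = Psi_sym k (of_real (inverse q)) 1 z"

definition weyl :: "nat \<Rightarrow> (nat \<Rightarrow> int) set" where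
  "weyl k = {n. \<forall>i\<in>{1..<k}. n (i + 1) \<le> n i}"

definition nabla_bwd :: "nat \<Rightarrow> ((nat \<Rightarrow> int) \<Rightarrow> complex) \<Rightarrow> (nat \<Rightarrow> int) \<Rightarrow> complex" where
  "nabla_bwd i f n = f (n(i := n i - 1)) - f n"

definition nabla_fwd :: "nat \<Rightarrow> ((nat \<Rightarrow> int) \<Rightarrow> complex) \<Rightarrow> (nat \<Rightarrow> int) \<Rightarrow> complex" where
  "nabla_fwd i f n = f (n(i := n i + 1)) - f n"

definition cluster_size :: "nat \<Rightarrow> (nat \<Rightarrow> int) \<Rightarrow> nat \<Rightarrow> nat" where
  "cluster_size k n j = card {m\<in>{1..k}. n m = n j}"

definition cluster_firsts :: "nat \<Rightarrow> (nat \<Rightarrow> int) \<Rightarrow> nat set" where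
  "cluster_firsts k n = {j\<in>{1..k}. j = 1 \<or> n (j - 1) \<noteq> n j}"

definition cluster_lasts :: "nat \<Rightarrow> (nat \<Rightarrow> int) \<Rightarrow> nat set" where
  "cluster_lasts k n = {j\<in>{1..k}. j = k \<or> n (j + 1) \<noteq> n j}"

text \<open>H^bwd: sum over clusters i of (1-q^{c_i}) (f(n^-_{c_1+...+c_i}) - f(n)); the position
c_1+...+c_i is the last position of cluster i.\<close>
definition H_bwd :: "nat \<Rightarrow> real \<Rightarrow> ((nat \<Rightarrow> int) \<Rightarrow> complex) \<Rightarrow> (nat \<Rightarrow> int) \<Rightarrow> complex" where
  "H_bwd k q f n = (\<Sum>j\<in>cluster_lasts k n.
      of_real (1 - q ^ cluster_size k n j) * (f (n(j := n j - 1)) - f n))"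

text \<open>H^fwd: position c_1+...+c_{i-1}+1 is the first position j of cluster i; g_1 = infinity
(j = 1), otherwise g_i = n_{j-1} - n_j and c_{i-1} is the size of the cluster of j-1.\<close>
definition H_fwd :: "nat \<Rightarrow> real \<Rightarrow> ((nat \<Rightarrow> int) \<Rightarrow> complex) \<Rightarrow> (nat \<Rightarrow> int) \<Rightarrow> complex" where
  "H_fwd k q f n = (\<Sum>j\<in>cluster_firsts k n.
      of_real (if j \<noteq> 1 \<and> n (j - 1) - n j = 1 then 1 - q ^ (cluster_size k n (j - 1) + 1)
               else 1 - q) * f (n(j := n j + 1))
      - of_real (1 - q ^ cluster_size k n j) * f n)"

definition C_q :: "nat \<Rightarrow> real \<Rightarrow> (nat \<Rightarrow> int) \<Rightarrow> complex" where
  "C_q k q n = of_real ((-1) ^ k * (inverse q) ^ (k * (k - 1) div 2)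
                 * (\<Prod>j\<in>cluster_firsts k n. qfact q (cluster_size k n j)))"

definition H_cfwd :: "nat \<Rightarrow> real \<Rightarrow> ((nat \<Rightarrow> int) \<Rightarrow> complex) \<Rightarrow> (nat \<Rightarrow> int) \<Rightarrow> complex" where
  "H_cfwd k q f n = C_q k q n * H_fwd k q (\<lambda>m. f m / C_q k q m) n"

definition Psi_r :: "nat \<Rightarrow> real \<Rightarrow> (nat \<Rightarrow> complex) \<Rightarrow> (nat \<Rightarrow> int) \<Rightarrow> complex" where
  "Psi_r k q z n = Psi_cfwd k q z n / C_q k q n"

end

theory Submission
  imports Defs
begin

inductive pf :: "((nat \<Rightarrow> complex) \<Rightarrow> complex) \<Rightarrow> bool" where
  pf_const: "pf (\<lambda>w. c)"
| pf_var: "pf (\<lambda>w. w i)"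
| pf_add: "pf f \<Longrightarrow> pf g \<Longrightarrow> pf (\<lambda>w. f w + g w)"
| pf_mult: "pf f \<Longrightarrow> pf g \<Longrightarrow> pf (\<lambda>w. f w * g w)"

lemma pf_diff: "pf f \<Longrightarrow> pf g \<Longrightarrow> pf (\<lambda>w. f w - g w)"
proof -
  assume "pf f" "pf g"
  then have "pf (\<lambda>w. f w + (-1) * g w)" by (intro pf_add pf_mult pf_const)
  then show ?thesis by simp
qed

lemma pf_sum: "finite A \<Longrightarrow> (\<And>a. a \<in> A \<Longrightarrow> pf (f a)) \<Longrightarrow> pf (\<lambda>w. \<Sum>a\<in>A. f a w)"
proof (induction A rule: finite_induct)
  case empty then show ?case using pf_const[of 0] by simp
next
  case (insert x F)
  then have "pf (\<lambda>w. f x w + (\<Sum>a\<in>F. f a w))" by (intro pf_add) auto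
  then show ?case using insert by simp
qed

lemma pf_prod: "finite A \<Longrightarrow> (\<And>a. a \<in> A \<Longrightarrow> pf (f a)) \<Longrightarrow> pf (\<lambda>w. \<Prod>a\<in>A. f a w)"
proof (induction A rule: finite_induct)
  case empty then show ?case using pf_const[of 1] by simp
next
  case (insert x F)
  then have "pf (\<lambda>w. f x w * (\<Prod>a\<in>F. f a w))" by (intro pf_mult) auto
  then show ?case using insert by simp
qed

lemma pf_power: "pf f \<Longrightarrow> pf (\<lambda>w. f w ^ m)"
proof (induction m)
  case 0 then show ?case using pf_const[of 1] by simp
next
  case (Suc m) then show ?case using pf_mult[of f "\<lambda>w. f w ^ m"] by simp
qed

lemma pf_subst: "pf f \<Longrightarrow> pf (\<lambda>w. f (w(a := w b)))"
proof (induction rule: pf.induct)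
  case (pf_var i)
  show ?case
  proof (cases "i = a")
    case True then show ?thesis using pf.pf_var[of b] by simp
  next
    case False then show ?thesis using pf.pf_var[of i] by simp
  qed
qed (auto intro: pf.intros)

lemma pf_tendsto: "pf f \<Longrightarrow> (g \<longlongrightarrow> l) F \<Longrightarrow> ((\<lambda>x. f (g x)) \<longlongrightarrow> f l) F"
proof (induction arbitrary: g l F rule: pf.induct)
  case (pf_var i)
  have "isCont (\<lambda>x. x i) l"
    using continuous_on_product_coordinates[of i] continuous_on_eq_continuous_at[OF open_UNIV] by blast
  then show ?case using pf_var isCont_tendsto_compose by blast
qed (auto intro: tendsto_intros)

lemma pf_div: "pf P \<Longrightarrow> \<exists>Q. pf Q \<and> (\<forall>w. P w - P (w(a := w b)) = (w a - w b) * Q w)"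
proof (induction rule: pf.induct)
  case (pf_const c)
  then show ?case using pf.pf_const[of 0] by auto
next
  case (pf_var i)
  show ?case
  proof (cases "i = a")
    case True then show ?thesis using pf.pf_const[of 1] by (intro exI[of _ "\<lambda>w. 1"]) auto
  next
    case False then show ?thesis using pf.pf_const[of 0] by (intro exI[of _ "\<lambda>w. 0"]) auto
  qed
next
  case (pf_add f g)
  then obtain Q1 Q2 where "pf Q1" "\<forall>w. f w - f (w(a := w b)) = (w a - w b) * Q1 w"
    "pf Q2" "\<forall>w. g w - g (w(a := w b)) = (w a - w b) * Q2 w" by blast
  moreover have "f w + g w - (f (w(a := w b)) + g (w(a := w b))) = (w a - w b) * (Q1 w + Q2 w)" for w
  proof -
    have "f w + g w - (f (w(a := w b)) + g (w(a := w b))) = (f w - f (w(a := w b))) + (g w - g (w(a := w b)))" by simp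
    also have "\<dots> = (w a - w b) * (Q1 w + Q2 w)" using calculation \<open>\<forall>w. f w - _ = _\<close> \<open>\<forall>w. g w - _ = _\<close> by (simp add: algebra_simps)
    finally show ?thesis .
  qed
  moreover have "pf (\<lambda>w. Q1 w + Q2 w)" by (rule pf.pf_add) fact+
  ultimately show ?case by blast
next
  case (pf_mult f g)
  then obtain Q1 Q2 where q: "pf Q1" "\<forall>w. f w - f (w(a := w b)) = (w a - w b) * Q1 w"
    "pf Q2" "\<forall>w. g w - g (w(a := w b)) = (w a - w b) * Q2 w" by blast
  have "pf (\<lambda>w. Q1 w * g w + f (w(a := w b)) * Q2 w)"
    using q pf_mult pf_subst by (intro pf.intros) auto
  moreover have "f w * g w - f (w(a := w b)) * g (w(a := w b)) = (w a - w b) * (Q1 w * g w + f (w(a := w b)) * Q2 w)" for w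
  proof -
    have "f w * g w - f (w(a := w b)) * g (w(a := w b)) = (f w - f (w(a := w b))) * g w + f (w(a := w b)) * (g w - g (w(a := w b)))"
      by (simp add: algebra_simps)
    also have "\<dots> = ((w a - w b) * Q1 w) * g w + f (w(a := w b)) * ((w a - w b) * Q2 w)"
      using q(2,4) by presburger
    also have "\<dots> = (w a - w b) * (Q1 w * g w + f (w(a := w b)) * Q2 w)"
      by (simp add: algebra_simps)
    finally show ?thesis .
  qed
  ultimately show ?case by blast
qed


lemma pf_zero_at_limit:
  fixes g :: "complex \<Rightarrow> nat \<Rightarrow> complex"
  assumes "pf Q" and "\<And>t. t \<noteq> 0 \<Longrightarrow> Q (g t) = 0" and "continuous_on UNIV g"
  shows "Q (g 0) = 0"
proof -
  have "(g \<longlongrightarrow> g 0) (at (0::complex))"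
    using assms(3) continuous_on_eq_continuous_at[OF open_UNIV] isCont_def by blast
  then have t1: "((\<lambda>t. Q (g t)) \<longlongrightarrow> Q (g 0)) (at (0::complex))"
    using pf_tendsto[OF assms(1)] by blast
  have "eventually (\<lambda>t. Q (g t) = 0) (at (0::complex))"
    using assms(2) by (auto simp: eventually_at_filter)
  then have t2: "((\<lambda>t. Q (g t)) \<longlongrightarrow> 0) (at (0::complex))"
    by (simp add: tendsto_eventually)
  show ?thesis using tendsto_unique[OF _ t1 t2] by simp
qed

lemma pf_vanish:
  assumes "finite S" "\<forall>(b,a)\<in>S. b < a" "pf P"
    "\<forall>w. (\<exists>(b,a)\<in>S. w a = w b) \<longrightarrow> P w = 0"
  shows "\<exists>Q. pf Q \<and> (\<forall>w. P w = (\<Prod>(b,a)\<in>S. w a - w b) * Q w)"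
  using assms
proof (induction S arbitrary: P rule: finite_induct)
  case empty
  then show ?case by auto
next
  case (insert x S)
  obtain b a where x: "x = (b, a)" by (cases x)
  with insert have ba: "b < a" by auto
  obtain Q1 where Q1: "pf Q1" "\<forall>w. P w - P (w(a := w b)) = (w a - w b) * Q1 w"
    using pf_div[OF insert.prems(2)] by blast
  have Pz: "P (w(a := w b)) = 0" for w
    using insert.prems(3) x ba by (auto intro!: bexI[of _ "(b,a)"])
  have PQ: "P w = (w a - w b) * Q1 w" for w using Q1(2) Pz by (metis diff_zero)
  have "Q1 w = 0" if "(d,c) \<in> S" "w c = w d" for w c d
  proof (cases "w a = w b")
    case False
    have "P w = 0" using insert.prems(3) that by auto
    then show ?thesis using PQ[of w] False by simp
  next
    case True
    have dc: "d < c" using insert.prems(1) that by auto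
    have nx: "(d,c) \<noteq> (b,a)" using insert.hyps(2) that x by auto
    define e where "e = (if a \<noteq> c \<and> a \<noteq> d then a else b)"
    have e: "e \<noteq> c" "e \<noteq> d" "e = a \<or> e = b"
      using nx dc ba unfolding e_def by auto
    define g where "g = (\<lambda>t. w(e := w e + t))"
    have "continuous_on UNIV g"
      unfolding g_def
    proof (intro continuous_on_coordinatewise_then_product)
      fix i show "continuous_on UNIV (\<lambda>x. (w(e := w e + x)) i)"
        by (cases "i = e") (auto intro!: continuous_intros)
    qed
    moreover have "Q1 (g t) = 0" if "t \<noteq> 0" for t
    proof -
      have "(g t) c = (g t) d" using e \<open>w c = w d\<close> by (simp add: g_def)
      then have "P (g t) = 0" using insert.prems(3) \<open>(d,c) \<in> S\<close> by auto
      moreover have "(g t) a \<noteq> (g t) b" using e True ba that by (auto simp: g_def)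
      ultimately show ?thesis using PQ[of "g t"] by simp
    qed
    ultimately have "Q1 (g 0) = 0" using pf_zero_at_limit[OF Q1(1)] by blast
    then show ?thesis by (simp add: g_def)
  qed
  then obtain Q where Q: "pf Q" "\<forall>w. Q1 w = (\<Prod>(b,a)\<in>S. w a - w b) * Q w"
    using insert.IH[of Q1] insert.prems(1) Q1(1) by fastforce
  show ?case
    using Q PQ insert.hyps x by (intro exI[of _ Q]) (auto simp: mult_ac)
qed


definition prs :: "nat \<Rightarrow> (nat \<times> nat) set" where
  "prs k = {(B, A). 1 \<le> B \<and> B < A \<and> A \<le> k}"

definition Vd :: "nat \<Rightarrow> (nat \<Rightarrow> complex) \<Rightarrow> complex" where
  "Vd k w = (\<Prod>(B,A)\<in>prs k. w A - w B)"

definition sg :: "nat \<Rightarrow> (nat \<Rightarrow> nat) \<Rightarrow> complex" where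
  "sg k \<sigma> = (\<Prod>(B,A)\<in>prs k. if \<sigma> B < \<sigma> A then 1 else -1)"

lemma finite_prs: "finite (prs k)"
  by (rule finite_subset[of _ "{1..k} \<times> {1..k}"]) (auto simp: prs_def)

lemma prod_perm_pairs:
  assumes "\<sigma> permutes {1..k}"
  shows "(\<Prod>(B,A)\<in>prs k. w (\<sigma> A) - w (\<sigma> B)) = sg k \<sigma> * Vd k w"
proof -
  define \<phi> where "\<phi> = (\<lambda>(B::nat,A::nat). (min (\<sigma> B) (\<sigma> A), max (\<sigma> B) (\<sigma> A)))"
  have inj\<sigma>: "inj \<sigma>" using permutes_inj[OF assms] .
  have im: "\<sigma> x \<in> {1..k} \<longleftrightarrow> x \<in> {1..k}" for x using permutes_in_image[OF assms] .
  have inj: "inj_on \<phi> (prs k)"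
  proof (rule inj_onI)
    fix x y assume "x \<in> prs k" "y \<in> prs k" "\<phi> x = \<phi> y"
    then obtain B A B' A' where xy: "x = (B,A)" "y = (B',A')" "B < A" "B' < A'"
      and e: "min (\<sigma> B) (\<sigma> A) = min (\<sigma> B') (\<sigma> A')" "max (\<sigma> B) (\<sigma> A) = max (\<sigma> B') (\<sigma> A')"
      by (auto simp: prs_def \<phi>_def)
    have "(\<sigma> B = \<sigma> B' \<and> \<sigma> A = \<sigma> A') \<or> (\<sigma> B = \<sigma> A' \<and> \<sigma> A = \<sigma> B')"
      using e by (auto simp: min_def max_def split: if_splits)
    then have "(B = B' \<and> A = A') \<or> (B = A' \<and> A = B')" using inj\<sigma> by (auto dest: injD)
    then show "x = y" using xy by auto
  qed
  have sub: "\<phi> ` prs k \<subseteq> prs k"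
  proof
    fix y assume "y \<in> \<phi> ` prs k"
    then obtain B A where "y = \<phi> (B,A)" "1 \<le> B" "B < A" "A \<le> k" by (auto simp: prs_def)
    moreover have "\<sigma> B \<in> {1..k}" "\<sigma> A \<in> {1..k}" using im calculation by auto
    moreover have "\<sigma> B \<noteq> \<sigma> A" using inj\<sigma> calculation by (auto dest: injD)
    ultimately show "y \<in> prs k" by (auto simp: prs_def \<phi>_def min_def max_def)
  qed
  have imeq: "\<phi> ` prs k = prs k"
    using card_subset_eq[OF finite_prs sub] card_image[OF inj] by simp
  have "(\<Prod>(B,A)\<in>prs k. w (\<sigma> A) - w (\<sigma> B))
      = (\<Prod>x\<in>prs k. (case x of (B,A) \<Rightarrow> if \<sigma> B < \<sigma> A then 1 else -1) * (w (snd (\<phi> x)) - w (fst (\<phi> x))))"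
  proof (rule prod.cong[OF refl])
    fix x assume "x \<in> prs k"
    then obtain B A where x: "x = (B,A)" "B < A" by (auto simp: prs_def)
    have "\<sigma> B \<noteq> \<sigma> A" using inj\<sigma> x by (auto dest: injD)
    then show "(case x of (B,A) \<Rightarrow> w (\<sigma> A) - w (\<sigma> B)) = (case x of (B,A) \<Rightarrow> if \<sigma> B < \<sigma> A then 1 else -1) * (w (snd (\<phi> x)) - w (fst (\<phi> x)))"
      using x by (auto simp: \<phi>_def min_def max_def)
  qed
  also have "\<dots> = sg k \<sigma> * (\<Prod>x\<in>prs k. w (snd (\<phi> x)) - w (fst (\<phi> x)))"
    by (simp add: prod.distrib sg_def case_prod_beta)
  also have "(\<Prod>x\<in>prs k. w (snd (\<phi> x)) - w (fst (\<phi> x))) = (\<Prod>y\<in>\<phi> ` prs k. w (snd y) - w (fst y))"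
    using prod.reindex[OF inj, of "\<lambda>y. w (snd y) - w (fst y)"] by simp
  also have "\<dots> = Vd k w" by (simp add: imeq Vd_def case_prod_beta)
  finally show ?thesis .
qed

lemma Vd_of_nat_ne: "Vd k (\<lambda>i. of_nat i) \<noteq> 0"
  unfolding Vd_def using finite_prs by (auto simp: prs_def prod_zero_iff)

lemma sg_mult:
  assumes "\<sigma> permutes {1..k}" "\<rho> permutes {1..k}"
  shows "sg k (\<sigma> \<circ> \<rho>) = sg k \<sigma> * sg k \<rho>"
proof -
  define w0 :: "nat \<Rightarrow> complex" where "w0 = (\<lambda>i. of_nat i)"
  have "(\<Prod>(B,A)\<in>prs k. w0 ((\<sigma> \<circ> \<rho>) A) - w0 ((\<sigma> \<circ> \<rho>) B)) = sg k (\<sigma> \<circ> \<rho>) * Vd k w0"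
    using prod_perm_pairs[OF permutes_compose[OF assms(2,1)]] .
  moreover have "(\<Prod>(B,A)\<in>prs k. (w0 \<circ> \<sigma>) (\<rho> A) - (w0 \<circ> \<sigma>) (\<rho> B)) = sg k \<rho> * Vd k (w0 \<circ> \<sigma>)"
    using prod_perm_pairs[OF assms(2)] .
  moreover have "Vd k (w0 \<circ> \<sigma>) = sg k \<sigma> * Vd k w0"
    using prod_perm_pairs[OF assms(1), of w0] by (simp add: Vd_def case_prod_beta)
  ultimately have "sg k (\<sigma> \<circ> \<rho>) * Vd k w0 = (sg k \<sigma> * sg k \<rho>) * Vd k w0"
    by (simp add: mult_ac)
  then show ?thesis using Vd_of_nat_ne[of k] unfolding w0_def by simp
qed

lemma sg_sq: "sg k \<sigma> * sg k \<sigma> = 1"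
  unfolding sg_def prod.distrib[symmetric] by (rule prod.neutral) auto

lemma sg_adj:
  assumes "1 \<le> i" "i < k"
  shows "sg k (Transposition.transpose i (Suc i)) = -1"
proof -
  have m: "(i, Suc i) \<in> prs k" using assms by (auto simp: prs_def)
  have "sg k (Transposition.transpose i (Suc i)) =
     (if Transposition.transpose i (Suc i) i < Transposition.transpose i (Suc i) (Suc i) then 1 else -1) *
     (\<Prod>(B,A)\<in>prs k - {(i, Suc i)}. if Transposition.transpose i (Suc i) B < Transposition.transpose i (Suc i) A then 1 else -1)"
    unfolding sg_def by (subst prod.remove[OF finite_prs m]) simp
  also have "(\<Prod>(B,A)\<in>prs k - {(i, Suc i)}. if Transposition.transpose i (Suc i) B < Transposition.transpose i (Suc i) A then 1 else (-1::complex)) = 1"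
    by (rule prod.neutral) (auto simp: prs_def Transposition.transpose_def split: if_splits)
  finally show ?thesis by simp
qed

lemma sg_transp_aux:
  assumes "1 \<le> a" "Suc (a + d) \<le> k"
  shows "sg k (Transposition.transpose a (Suc (a + d))) = -1"
  using assms
proof (induction d)
  case 0
  then show ?case using sg_adj[of a k] by simp
next
  case (Suc d)
  define b where "b = Suc (a + d)"
  have p1: "Transposition.transpose b (Suc b) permutes {1..k}"
    using Suc.prems unfolding b_def by (intro permutes_swap_id) auto
  have p2: "Transposition.transpose a b permutes {1..k}"
    using Suc.prems unfolding b_def by (intro permutes_swap_id) auto
  have eq: "Transposition.transpose a (Suc b) = Transposition.transpose b (Suc b) \<circ> Transposition.transpose a b \<circ> Transposition.transpose b (Suc b)"
    using transpose_comp_triple[of "Suc b" a b] unfolding b_def by (simp add: transpose_commute)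
  have "sg k (Transposition.transpose a (Suc b)) = sg k (Transposition.transpose b (Suc b)) * sg k (Transposition.transpose a b) * sg k (Transposition.transpose b (Suc b))"
    unfolding eq using sg_mult permutes_compose p1 p2 by metis
  also have "\<dots> = sg k (Transposition.transpose a b)"
    using sg_sq[of k "Transposition.transpose b (Suc b)"] by (simp add: mult_ac)
  finally show ?case using Suc unfolding b_def by simp
qed

lemma sg_transp:
  assumes "1 \<le> a" "a < b" "b \<le> k"
  shows "sg k (Transposition.transpose a b) = -1"
proof -
  obtain d where "b = Suc (a + d)" using assms(2) less_iff_Suc_add by auto
  then show ?thesis using sg_transp_aux[of a d k] assms by simp
qed


lemma powi_as_div:
  fixes x :: complex
  assumes "x \<noteq> 0" "m + int N \<ge> 0"
  shows "x powi m = x ^ nat (m + int N) / x ^ N"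
proof -
  have "x ^ nat (m + int N) = x powi (m + int N)"
    using assms(2) by (metis int_nat_eq power_int_of_nat)
  also have "\<dots> = x powi m * x ^ N" using assms(1) by (simp add: power_int_add)
  finally show ?thesis using assms(1) by simp
qed

lemma sym_expr_prs: "sym_expr k p e z n =
     (\<Sum>\<sigma> | \<sigma> permutes {1..k}.
        (\<Prod>(B, A) \<in> prs k. (z (\<sigma> A) - p * z (\<sigma> B)) / (z (\<sigma> A) - z (\<sigma> B)))
        * (\<Prod>j=1..k. (1 - z (\<sigma> j)) powi (e * n j)))"
  unfolding sym_expr_def prs_def ..

lemma finite_perms: "finite {\<sigma>. \<sigma> permutes {1..(k::nat)}}"
  using finite_permutations[of "{1..k}"] by simp

lemma sym_repr:
  fixes n :: "nat \<Rightarrow> int" and p :: complex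
  assumes N: "\<forall>j\<in>{1..k}. e * n j + int N \<ge> 0"
  shows "\<exists>Q. pf Q \<and> (\<forall>w. inj_on w {1..k} \<and> (\<forall>i\<in>{1..k}. w i \<noteq> 1) \<longrightarrow>
            sym_expr k p e w n = Q w / (\<Prod>j=1..k. (1 - w j) ^ N))"
proof -
  define G where "G = (\<lambda>(\<sigma>::nat\<Rightarrow>nat) (w::nat\<Rightarrow>complex). (\<Prod>(B,A)\<in>prs k. w (\<sigma> A) - p * w (\<sigma> B)) *
                          (\<Prod>j=1..k. (1 - w (\<sigma> j)) ^ nat (e * n j + int N)))"
  define P where "P = (\<lambda>w. \<Sum>\<sigma> | \<sigma> permutes {1..k}. sg k \<sigma> * G \<sigma> w)"
  have pfG: "pf (G \<sigma>)" for \<sigma>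
  proof -
    have a: "pf (\<lambda>w. \<Prod>x\<in>prs k. w (\<sigma> (snd x)) - p * w (\<sigma> (fst x)))"
      by (rule pf_prod[OF finite_prs]) (rule pf_diff[OF pf_var pf_mult[OF pf_const pf_var]])
    have b: "pf (\<lambda>w. \<Prod>j=1..k. (1 - w (\<sigma> j)) ^ nat (e * n j + int N))"
      by (rule pf_prod[OF finite_atLeastAtMost]) (rule pf_power[OF pf_diff[OF pf_const pf_var]])
    show ?thesis unfolding G_def case_prod_beta by (rule pf_mult[OF a b])
  qed
  have pfP: "pf P"
    unfolding P_def by (rule pf_sum[OF finite_perms]) (rule pf_mult[OF pf_const pfG])
  have van: "\<forall>w. (\<exists>(b,a)\<in>prs k. w a = w b) \<longrightarrow> P w = 0"
  proof (intro allI impI)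
    fix w :: "nat \<Rightarrow> complex" assume "\<exists>(b,a)\<in>prs k. w a = w b"
    then obtain b a where ba: "1 \<le> b" "b < a" "a \<le> k" "w a = w b" by (auto simp: prs_def)
    define \<tau> where "\<tau> = Transposition.transpose b a"
    have t: "\<tau> permutes {1..k}" unfolding \<tau>_def using ba by (intro permutes_swap_id) auto
    have wt: "w (\<tau> x) = w x" for x using ba by (auto simp: \<tau>_def Transposition.transpose_def)
    have "P w = (\<Sum>\<sigma> | \<sigma> permutes {1..k}. sg k (\<tau> \<circ> \<sigma>) * G (\<tau> \<circ> \<sigma>) w)"
      unfolding P_def by (rule setum_permutations_compose_left[OF t])
    also have "\<dots> = (\<Sum>\<sigma> | \<sigma> permutes {1..k}. - (sg k \<sigma> * G \<sigma> w))"
    proof (rule sum.cong[OF refl])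
      fix \<sigma> assume "\<sigma> \<in> {\<sigma>. \<sigma> permutes {1..k}}"
      then have s: "\<sigma> permutes {1..k}" by simp
      have "sg k (\<tau> \<circ> \<sigma>) = - sg k \<sigma>"
        using sg_mult[OF t s] sg_transp[of b a k] ba by (simp add: \<tau>_def)
      moreover have "G (\<tau> \<circ> \<sigma>) w = G \<sigma> w" unfolding G_def by (simp add: wt)
      ultimately show "sg k (\<tau> \<circ> \<sigma>) * G (\<tau> \<circ> \<sigma>) w = - (sg k \<sigma> * G \<sigma> w)" by simp
    qed
    also have "\<dots> = - P w" unfolding P_def by (simp add: sum_negf)
    finally show "P w = 0" by simp
  qed
  obtain Q where Q: "pf Q" "\<forall>w. P w = (\<Prod>(b,a)\<in>prs k. w a - w b) * Q w"
    using pf_vanish[OF finite_prs _ pfP van] by (auto simp: prs_def)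
  have "sym_expr k p e w n = Q w / (\<Prod>j=1..k. (1 - w j) ^ N)"
    if w: "inj_on w {1..k}" "\<forall>i\<in>{1..k}. w i \<noteq> 1" for w :: "nat \<Rightarrow> complex"
  proof -
    define M where "M = (\<Prod>j=1..k. (1 - w j) ^ N)"
    have M0: "M \<noteq> 0" unfolding M_def using w(2) by (auto simp: prod_zero_iff)
    have ne: "w A - w B \<noteq> 0" if "(B,A) \<in> prs k" for A B
    proof
      assume "w A - w B = 0"
      then have "w A = w B" by simp
      moreover have "A \<in> {1..k}" "B \<in> {1..k}" "A \<noteq> B" using that by (auto simp: prs_def)
      ultimately show False using inj_onD[OF w(1)] by blast
    qed
    have V0: "Vd k w \<noteq> 0" unfolding Vd_def using ne finite_prs
      by (subst prod_zero_iff) auto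
    have trm: "(\<Prod>(B, A) \<in> prs k. (w (\<sigma> A) - p * w (\<sigma> B)) / (w (\<sigma> A) - w (\<sigma> B)))
        * (\<Prod>j=1..k. (1 - w (\<sigma> j)) powi (e * n j)) = sg k \<sigma> * G \<sigma> w / (Vd k w * M)"
      if s: "\<sigma> permutes {1..k}" for \<sigma>
    proof -
      have im: "\<sigma> j \<in> {1..k}" if "j \<in> {1..k}" for j using permutes_in_image[OF s] that by simp
      have "(\<Prod>(B, A) \<in> prs k. (w (\<sigma> A) - p * w (\<sigma> B)) / (w (\<sigma> A) - w (\<sigma> B)))
          = (\<Prod>(B, A) \<in> prs k. w (\<sigma> A) - p * w (\<sigma> B)) / (\<Prod>(B, A) \<in> prs k. w (\<sigma> A) - w (\<sigma> B))"
        by (simp add: prod_dividef case_prod_beta)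
      also have "(\<Prod>(B, A) \<in> prs k. w (\<sigma> A) - w (\<sigma> B)) = sg k \<sigma> * Vd k w"
        by (rule prod_perm_pairs[OF s])
      finally have 1: "(\<Prod>(B, A) \<in> prs k. (w (\<sigma> A) - p * w (\<sigma> B)) / (w (\<sigma> A) - w (\<sigma> B)))
          = (\<Prod>(B, A) \<in> prs k. w (\<sigma> A) - p * w (\<sigma> B)) / (sg k \<sigma> * Vd k w)" .
      have s0: "sg k \<sigma> \<noteq> 0" using sg_sq[of k \<sigma>] by auto
      have "sg k \<sigma> * (\<Prod>(B, A) \<in> prs k. w (\<sigma> A) - p * w (\<sigma> B)) / Vd k w
           = (sg k \<sigma> * sg k \<sigma>) * (\<Prod>(B, A) \<in> prs k. w (\<sigma> A) - p * w (\<sigma> B)) / (sg k \<sigma> * Vd k w)"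
        using s0 by simp
      then have 1: "(\<Prod>(B, A) \<in> prs k. (w (\<sigma> A) - p * w (\<sigma> B)) / (w (\<sigma> A) - w (\<sigma> B)))
          = sg k \<sigma> * (\<Prod>(B, A) \<in> prs k. w (\<sigma> A) - p * w (\<sigma> B)) / Vd k w"
        using 1 sg_sq[of k \<sigma>] by simp
      have "(\<Prod>j=1..k. (1 - w (\<sigma> j)) powi (e * n j))
          = (\<Prod>j=1..k. (1 - w (\<sigma> j)) ^ nat (e * n j + int N) / (1 - w (\<sigma> j)) ^ N)"
      proof (rule prod.cong[OF refl])
        fix j assume j: "j \<in> {1..k}"
        have "1 - w (\<sigma> j) \<noteq> 0" using w(2) im[OF j] by auto
        then show "(1 - w (\<sigma> j)) powi (e * n j) = (1 - w (\<sigma> j)) ^ nat (e * n j + int N) / (1 - w (\<sigma> j)) ^ N"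
          using powi_as_div N j by blast
      qed
      also have "\<dots> = (\<Prod>j=1..k. (1 - w (\<sigma> j)) ^ nat (e * n j + int N)) / (\<Prod>j=1..k. (1 - w (\<sigma> j)) ^ N)"
        by (simp add: prod_dividef)
      also have "(\<Prod>j=1..k. (1 - w (\<sigma> j)) ^ N) = M"
        unfolding M_def using prod.permute[OF s, of "\<lambda>j. (1 - w j) ^ N"] by (simp add: o_def)
      finally have 2: "(\<Prod>j=1..k. (1 - w (\<sigma> j)) powi (e * n j)) = (\<Prod>j=1..k. (1 - w (\<sigma> j)) ^ nat (e * n j + int N)) / M" .
      show ?thesis unfolding 1 2 G_def by simp
    qed
    have "sym_expr k p e w n = (\<Sum>\<sigma> | \<sigma> permutes {1..k}. sg k \<sigma> * G \<sigma> w / (Vd k w * M))"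
      unfolding sym_expr_prs by (rule sum.cong[OF refl]) (use trm in simp)
    also have "\<dots> = P w / (Vd k w * M)" unfolding P_def by (simp add: sum_divide_distrib)
    also have "\<dots> = Q w / M" using Q(2) V0 M0 by (simp add: Vd_def case_prod_beta)
    finally show ?thesis unfolding M_def .
  qed
  then show ?thesis using Q(1) by blast
qed


lemma gen_domainD: "w \<in> gen_domain k z \<Longrightarrow> inj_on w {1..k} \<and> (\<forall>i\<in>{1..k}. w i \<noteq> 1)"
  by (simp add: gen_domain_def)

lemma nontriv:
  assumes "1 \<le> k" "\<forall>i\<in>{1..k}. z i \<noteq> 1"
  shows "at z within gen_domain k z \<noteq> bot"
proof -
  define h where "h = (\<lambda>(t::complex) (i::nat). if i \<in> {1..k} then z i + t * of_nat i else z i)"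
  define t where "t = (\<lambda>m::nat. 1 / of_nat (Suc m) :: complex)"
  have hc: "continuous_on UNIV h"
    unfolding h_def
  proof (intro continuous_on_coordinatewise_then_product)
    fix i show "continuous_on UNIV (\<lambda>x. if i \<in> {1..k} then z i + x * of_nat i else z i)"
      by (cases "i \<in> {1..k}") (auto intro!: continuous_intros)
  qed
  have t0: "t \<longlonglongrightarrow> 0" unfolding t_def
    using LIMSEQ_Suc[OF lim_1_over_n] by simp
  have tnz: "t m \<noteq> 0" for m unfolding t_def by (metis of_nat_eq_0_iff nat.distinct(1) divide_eq_0_iff one_neq_zero)
  have hz: "h 0 = z" by (auto simp: h_def)
  have X: "(\<lambda>m. h (t m)) \<longlonglongrightarrow> z"
    using continuous_on_tendsto_compose[OF hc t0] hz by simp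
  have ev1: "eventually (\<lambda>m. \<forall>i\<in>{1..k}. h (t m) i \<noteq> 1) sequentially"
  proof (rule eventually_ball_finite[OF finite_atLeastAtMost], rule ballI)
    fix i assume i: "i \<in> {1..k}"
    have "(\<lambda>m. z i + t m * of_nat i) \<longlonglongrightarrow> z i + 0 * of_nat i"
      by (intro tendsto_intros t0)
    then have "eventually (\<lambda>m. z i + t m * of_nat i \<noteq> 1) sequentially"
      using assms(2) i by (intro tendsto_imp_eventually_ne) auto
    then show "eventually (\<lambda>m. h (t m) i \<noteq> 1) sequentially" using i by (simp add: h_def)
  qed
  have ev2: "eventually (\<lambda>m. \<forall>ij\<in>{1..k}\<times>{1..k}. fst ij \<noteq> snd ij \<longrightarrow> h (t m) (fst ij) \<noteq> h (t m) (snd ij)) sequentially"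
  proof (rule eventually_ball_finite, simp, rule ballI)
    fix ij assume ij: "ij \<in> {1..k}\<times>{1..k}"
    obtain i j where ij': "ij = (i,j)" "i \<in> {1..k}" "j \<in> {1..k}" using ij by auto
    show "eventually (\<lambda>m. fst ij \<noteq> snd ij \<longrightarrow> h (t m) (fst ij) \<noteq> h (t m) (snd ij)) sequentially"
    proof (cases "z i = z j")
      case True
      have "fst ij \<noteq> snd ij \<longrightarrow> h (t m) (fst ij) \<noteq> h (t m) (snd ij)" for m
        using True ij' tnz[of m] by (auto simp: h_def)
      then show ?thesis by simp
    next
      case False
      have "(\<lambda>m. (z i + t m * of_nat i) - (z j + t m * of_nat j)) \<longlonglongrightarrow> (z i + 0 * of_nat i) - (z j + 0 * of_nat j)"
        by (intro tendsto_intros t0)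
      then have "eventually (\<lambda>m. (z i + t m * of_nat i) - (z j + t m * of_nat j) \<noteq> 0) sequentially"
        using False by (intro tendsto_imp_eventually_ne) auto
      then show ?thesis
        by eventually_elim (use ij' in \<open>auto simp: h_def\<close>)
    qed
  qed
  have "z islimpt gen_domain k z"
  proof (rule islimptI)
    fix T assume T: "z \<in> T" "open T"
    have ev3: "eventually (\<lambda>m. h (t m) \<in> T) sequentially"
      using topological_tendstoD[OF X T(2,1)] .
    obtain m where m: "\<forall>i\<in>{1..k}. h (t m) i \<noteq> 1"
      "\<forall>ij\<in>{1..k}\<times>{1..k}. fst ij \<noteq> snd ij \<longrightarrow> h (t m) (fst ij) \<noteq> h (t m) (snd ij)"
      "h (t m) \<in> T"
      using eventually_happens'[OF sequentially_bot eventually_conj[OF ev1 eventually_conj[OF ev2 ev3]]] by auto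
    have "inj_on (h (t m)) {1..k}"
      using m(2) by (auto simp: inj_on_def)
    moreover have "\<forall>i. i \<notin> {1..k} \<longrightarrow> h (t m) i = z i" by (simp add: h_def)
    ultimately have "h (t m) \<in> gen_domain k z" using m(1) by (simp add: gen_domain_def)
    moreover have "h (t m) \<noteq> z"
    proof
      assume "h (t m) = z"
      then have "h (t m) 1 = z 1" by simp
      then show False using assms(1) tnz[of m] by (simp add: h_def)
    qed
    ultimately show "\<exists>y\<in>gen_domain k z. y \<in> T \<and> y \<noteq> z" using m(3) by blast
  qed
  then show ?thesis using trivial_limit_within by blast
qed

lemma sym_tendsto:
  fixes n :: "nat \<Rightarrow> int" and p :: complex
  assumes "1 \<le> k" "\<forall>i\<in>{1..k}. z i \<noteq> 1"
  shows "((\<lambda>w. sym_expr k p e w n) \<longlongrightarrow> Psi_sym k p e z n) (at z within gen_domain k z)"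
proof -
  define N where "N = (\<Sum>j=1..k. nat \<bar>e * n j\<bar>)"
  have N: "\<forall>j\<in>{1..k}. e * n j + int N \<ge> 0"
  proof
    fix j assume j: "j \<in> {1..k}"
    have "nat \<bar>e * n j\<bar> \<le> N" unfolding N_def using j by (intro member_le_sum) auto
    then show "e * n j + int N \<ge> 0" by linarith
  qed
  obtain Q where Q: "pf Q" "\<forall>w. inj_on w {1..k} \<and> (\<forall>i\<in>{1..k}. w i \<noteq> 1) \<longrightarrow>
            sym_expr k p e w n = Q w / (\<Prod>j=1..k. (1 - w j) ^ N)"
    using sym_repr[OF N] by blast
  define M where "M = (\<lambda>w::nat\<Rightarrow>complex. \<Prod>j=1..k. (1 - w j) ^ N)"
  have pfM: "pf M" unfolding M_def
    by (rule pf_prod[OF finite_atLeastAtMost]) (rule pf_power[OF pf_diff[OF pf_const pf_var]])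
  let ?F = "at z within gen_domain k z"
  have id: "((\<lambda>w. w) \<longlongrightarrow> z) ?F" by (rule tendsto_ident_at)
  have "((\<lambda>w. Q w / M w) \<longlongrightarrow> Q z / M z) ?F"
    using pf_tendsto[OF Q(1) id] pf_tendsto[OF pfM id] assms(2)
    by (intro tendsto_divide) (auto simp: M_def prod_zero_iff)
  moreover have "eventually (\<lambda>w. Q w / M w = sym_expr k p e w n) ?F"
    unfolding eventually_at_filter
    by (rule always_eventually) (use Q(2) gen_domainD in \<open>auto simp: M_def\<close>)
  ultimately have T: "((\<lambda>w. sym_expr k p e w n) \<longlongrightarrow> Q z / M z) ?F"
    by (rule Lim_transform_eventually)
  have "Psi_sym k p e z n = Q z / M z"
    unfolding Psi_sym_def using tendsto_Lim[OF nontriv[OF assms] T] .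
  then show ?thesis using T by simp
qed

lemma lim_eq:
  assumes "F \<noteq> bot" "(f \<longlongrightarrow> a) F" "(g \<longlongrightarrow> (b::complex)) F" "eventually (\<lambda>x. f x = g x) F"
  shows "a = b"
proof -
  have "(g \<longlongrightarrow> a) F" using assms(2,4) by (rule Lim_transform_eventually)
  then show ?thesis using tendsto_unique assms(1,3) by blast
qed


definition cc :: "nat \<Rightarrow> complex \<Rightarrow> (nat \<Rightarrow> complex) \<Rightarrow> (nat \<Rightarrow> nat) \<Rightarrow> complex" where
  "cc k p w \<sigma> = (\<Prod>(B, A) \<in> prs k. (w (\<sigma> A) - p * w (\<sigma> B)) / (w (\<sigma> A) - w (\<sigma> B)))"

definition XX :: "nat \<Rightarrow> int \<Rightarrow> (nat \<Rightarrow> complex) \<Rightarrow> (nat \<Rightarrow> nat) \<Rightarrow> (nat \<Rightarrow> int) \<Rightarrow> complex" where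
  "XX k e w \<sigma> n = (\<Prod>j=1..k. (1 - w (\<sigma> j)) powi (e * n j))"

lemma sym_cc: "sym_expr k p e w n = (\<Sum>\<sigma> | \<sigma> permutes {1..k}. cc k p w \<sigma> * XX k e w \<sigma> n)"
  unfolding sym_expr_prs cc_def XX_def ..

lemma XX_shift:
  assumes s: "\<sigma> permutes {1..k}" and w: "\<forall>i\<in>{1..k}. w i \<noteq> 1" and i: "i \<in> {1..k}"
  shows "XX k e w \<sigma> (n(i := n i + d)) = XX k e w \<sigma> n * (1 - w (\<sigma> i)) powi (e * d)"
proof -
  have nz: "1 - w (\<sigma> j) \<noteq> 0" if "j \<in> {1..k}" for j
    using w permutes_in_image[OF s] that by force
  have fin: "finite {1..k}" by simp
  have e1: "XX k e w \<sigma> (n(i := n i + d)) = (1 - w (\<sigma> i)) powi (e * (n i + d)) *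
        (\<Prod>j\<in>{1..k} - {i}. (1 - w (\<sigma> j)) powi (e * (n(i := n i + d)) j))"
    unfolding XX_def by (subst prod.remove[OF fin i]) simp
  have e2: "(\<Prod>j\<in>{1..k} - {i}. (1 - w (\<sigma> j)) powi (e * (n(i := n i + d)) j))
      = (\<Prod>j\<in>{1..k} - {i}. (1 - w (\<sigma> j)) powi (e * n j))"
    by (rule prod.cong) auto
  have e3: "(1 - w (\<sigma> i)) powi (e * (n i + d)) = (1 - w (\<sigma> i)) powi (e * n i) * (1 - w (\<sigma> i)) powi (e * d)"
    using nz[OF i] by (simp add: distrib_left power_int_add)
  have e4: "XX k e w \<sigma> n = (1 - w (\<sigma> i)) powi (e * n i) * (\<Prod>j\<in>{1..k} - {i}. (1 - w (\<sigma> j)) powi (e * n j))"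
    unfolding XX_def by (subst prod.remove[OF fin i]) simp
  show ?thesis unfolding e1 e2 e3 e4 by (simp only: mult_ac)
qed

lemma sym_shift:
  assumes w: "\<forall>i\<in>{1..k}. w i \<noteq> 1" and i: "i \<in> {1..k}"
  shows "sym_expr k p e w (n(i := n i + d)) = (\<Sum>\<sigma> | \<sigma> permutes {1..k}. cc k p w \<sigma> * XX k e w \<sigma> n * (1 - w (\<sigma> i)) powi (e * d))"
  unfolding sym_cc by (rule sum.cong[OF refl]) (use XX_shift[OF _ w i] in \<open>simp add: mult_ac\<close>)

lemma bulk:
  assumes w: "\<forall>i\<in>{1..k}. w i \<noteq> 1" and ed: "e * d = 1"
  shows "(\<Sum>i=1..k. sym_expr k p e w (n(i := n i + d)) - sym_expr k p e w n) = - (\<Sum>j=1..k. w j) * sym_expr k p e w n"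
proof -
  have ed2: "d * e = 1" using ed by (simp add: mult.commute)
  have "(\<Sum>i=1..k. sym_expr k p e w (n(i := n i + d)) - sym_expr k p e w n)
      = (\<Sum>i=1..k. \<Sum>\<sigma> | \<sigma> permutes {1..k}. cc k p w \<sigma> * XX k e w \<sigma> n * (- w (\<sigma> i)))"
  proof (rule sum.cong[OF refl])
    fix i assume i: "i \<in> {1..k}"
    show "sym_expr k p e w (n(i := n i + d)) - sym_expr k p e w n = (\<Sum>\<sigma> | \<sigma> permutes {1..k}. cc k p w \<sigma> * XX k e w \<sigma> n * (- w (\<sigma> i)))"
      by (subst sym_shift[OF w i]) (simp add: sym_cc ed ed2 sum_subtractf[symmetric] algebra_simps)
  qed
  also have "\<dots> = (\<Sum>\<sigma> | \<sigma> permutes {1..k}. \<Sum>i=1..k. cc k p w \<sigma> * XX k e w \<sigma> n * (- w (\<sigma> i)))"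
    by (rule sum.swap)
  also have "\<dots> = (\<Sum>\<sigma> | \<sigma> permutes {1..k}. cc k p w \<sigma> * XX k e w \<sigma> n * (- (\<Sum>j=1..k. w j)))"
  proof (rule sum.cong[OF refl])
    fix \<sigma> assume "\<sigma> \<in> {\<sigma>. \<sigma> permutes {1..k}}"
    then have s: "\<sigma> permutes {1..k}" by simp
    have "(\<Sum>i=1..k. w (\<sigma> i)) = (\<Sum>j=1..k. w j)"
      using sum.permute[OF s, of w] by (simp add: o_def)
    then show "(\<Sum>i=1..k. cc k p w \<sigma> * XX k e w \<sigma> n * (- w (\<sigma> i))) = cc k p w \<sigma> * XX k e w \<sigma> n * (- (\<Sum>j=1..k. w j))"
      by (simp add: sum_distrib_left[symmetric] sum_negf)
  qed
  also have "\<dots> = - (\<Sum>j=1..k. w j) * sym_expr k p e w n"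
    unfolding sym_cc by (simp add: sum_distrib_left mult_ac)
  finally show ?thesis .
qed

lemma tau_R:
  assumes "1 \<le> i" "i < k" "1 \<le> B" "B < A" "A \<le> k" "(B,A) \<noteq> (i, Suc i)"
  shows "1 \<le> Transposition.transpose i (Suc i) B \<and> Transposition.transpose i (Suc i) B < Transposition.transpose i (Suc i) A
     \<and> Transposition.transpose i (Suc i) A \<le> k \<and> (Transposition.transpose i (Suc i) B, Transposition.transpose i (Suc i) A) \<noteq> (i, Suc i)"
  using assms
  by (cases "B = i"; cases "B = Suc i"; cases "A = i"; cases "A = Suc i") auto

lemma boundary:
  assumes i: "1 \<le> i" "i < k" and ni: "n i = n (Suc i)"
    and w: "inj_on w {1..k}" "\<forall>i\<in>{1..k}. w i \<noteq> 1"
    and \<phi>: "\<forall>a b. a \<noteq> b \<longrightarrow> (a - p*b)/(a - b) * \<phi> a b + (b - p*a)/(b - a) * \<phi> b a = 0"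
  shows "(\<Sum>\<sigma> | \<sigma> permutes {1..k}. cc k p w \<sigma> * XX k e w \<sigma> n * \<phi> (w (\<sigma> (Suc i))) (w (\<sigma> i))) = 0"
proof -
  define \<tau> where "\<tau> = Transposition.transpose i (Suc i)"
  have t: "\<tau> permutes {1..k}" unfolding \<tau>_def using i by (intro permutes_swap_id) auto
  define F where "F = (\<lambda>\<sigma>. cc k p w \<sigma> * XX k e w \<sigma> n * \<phi> (w (\<sigma> (Suc i))) (w (\<sigma> i)))"
  define R where "R = prs k - {(i, Suc i)}"
  have m: "(i, Suc i) \<in> prs k" using i by (auto simp: prs_def)
  have fin: "finite R" unfolding R_def using finite_prs by simp
  define r where "r = (\<lambda>x y. (w x - p * w y) / (w x - w y))"
  have ccs: "cc k p w \<sigma> = r (\<sigma> (Suc i)) (\<sigma> i) * (\<Prod>(B,A)\<in>R. r (\<sigma> A) (\<sigma> B))" for \<sigma>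
    unfolding cc_def R_def r_def by (subst prod.remove[OF finite_prs m]) simp
  have ntau: "n (\<tau> j) = n j" for j using ni by (auto simp: \<tau>_def Transposition.transpose_def)
  have Rt: "(\<Prod>(B,A)\<in>R. g (\<tau> A) (\<tau> B)) = (\<Prod>(B,A)\<in>R. g A B)" for g :: "nat \<Rightarrow> nat \<Rightarrow> complex"
  proof (rule prod.reindex_bij_witness[of _ "\<lambda>(B,A). (\<tau> B, \<tau> A)" "\<lambda>(B,A). (\<tau> B, \<tau> A)"])
    fix a assume "a \<in> R"
    then obtain B A where a: "a = (B,A)" "1 \<le> B" "B < A" "A \<le> k" "(B,A) \<noteq> (i, Suc i)"
      by (auto simp: R_def prs_def)
    show "(case case a of (B, A) \<Rightarrow> (\<tau> B, \<tau> A) of (B, A) \<Rightarrow> (\<tau> B, \<tau> A)) = a"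
      using a(1) by (simp add: \<tau>_def)
    show "(case a of (B, A) \<Rightarrow> (\<tau> B, \<tau> A)) \<in> R"
      using tau_R[OF i a(2-5)] a(1) unfolding R_def prs_def \<tau>_def by simp
    show "(case case a of (B, A) \<Rightarrow> (\<tau> B, \<tau> A) of (B, A) \<Rightarrow> g A B) = (case a of (B, A) \<Rightarrow> g (\<tau> A) (\<tau> B))"
      using a(1) by simp
  next
    fix a assume "a \<in> R"
    then obtain B A where a: "a = (B,A)" "1 \<le> B" "B < A" "A \<le> k" "(B,A) \<noteq> (i, Suc i)"
      by (auto simp: R_def prs_def)
    show "(case case a of (B, A) \<Rightarrow> (\<tau> B, \<tau> A) of (B, A) \<Rightarrow> (\<tau> B, \<tau> A)) = a"
      using a(1) by (simp add: \<tau>_def)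
    show "(case a of (B, A) \<Rightarrow> (\<tau> B, \<tau> A)) \<in> R"
      using tau_R[OF i a(2-5)] a(1) unfolding R_def prs_def \<tau>_def by simp
  qed
  have key: "F \<sigma> + F (\<sigma> \<circ> \<tau>) = 0" if s: "\<sigma> permutes {1..k}" for \<sigma>
  proof -
    have XXt: "XX k e w (\<sigma> \<circ> \<tau>) n = XX k e w \<sigma> n"
    proof -
      have "XX k e w (\<sigma> \<circ> \<tau>) n = (\<Prod>j=1..k. ((\<lambda>j. (1 - w (\<sigma> j)) powi (e * n j)) \<circ> \<tau>) j)"
        unfolding XX_def by (simp add: ntau o_def)
      also have "\<dots> = XX k e w \<sigma> n"
        unfolding XX_def using prod.permute[OF t, of "\<lambda>j. (1 - w (\<sigma> j)) powi (e * n j)"] by simp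
      finally show ?thesis .
    qed
    have cct: "cc k p w (\<sigma> \<circ> \<tau>) = r (\<sigma> i) (\<sigma> (Suc i)) * (\<Prod>(B,A)\<in>R. r (\<sigma> A) (\<sigma> B))"
      unfolding ccs using Rt[of "\<lambda>x y. r (\<sigma> x) (\<sigma> y)"] by (simp add: \<tau>_def)
    have ne: "w (\<sigma> (Suc i)) \<noteq> w (\<sigma> i)"
    proof
      assume "w (\<sigma> (Suc i)) = w (\<sigma> i)"
      moreover have "\<sigma> (Suc i) \<in> {1..k}" "\<sigma> i \<in> {1..k}" using permutes_in_image[OF s] i by auto
      ultimately have "\<sigma> (Suc i) = \<sigma> i" using inj_onD[OF w(1)] by blast
      then have "Suc i = i" by (rule injD[OF permutes_inj[OF s]])
      then show False by simp
    qed
    have tt: "\<tau> (Suc i) = i" "\<tau> i = Suc i" by (auto simp: \<tau>_def)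
    have "F \<sigma> + F (\<sigma> \<circ> \<tau>) = (\<Prod>(B,A)\<in>R. r (\<sigma> A) (\<sigma> B)) * XX k e w \<sigma> n *
         (r (\<sigma> (Suc i)) (\<sigma> i) * \<phi> (w (\<sigma> (Suc i))) (w (\<sigma> i)) + r (\<sigma> i) (\<sigma> (Suc i)) * \<phi> (w (\<sigma> i)) (w (\<sigma> (Suc i))))"
      unfolding F_def ccs[of \<sigma>] cct XXt by (simp add: tt algebra_simps)
    also have "\<dots> = 0" using \<phi> ne unfolding r_def by simp
    finally show ?thesis .
  qed
  have "sum F {\<sigma>. \<sigma> permutes {1..k}} = sum (\<lambda>\<sigma>. F (\<sigma> \<circ> \<tau>)) {\<sigma>. \<sigma> permutes {1..k}}"
    by (rule sum_permutations_compose_right[OF t])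
  then have "2 * sum F {\<sigma>. \<sigma> permutes {1..k}} = sum (\<lambda>\<sigma>. F \<sigma> + F (\<sigma> \<circ> \<tau>)) {\<sigma>. \<sigma> permutes {1..k}}"
    by (simp add: sum.distrib)
  also have "\<dots> = 0" using key by simp
  finally show ?thesis unfolding F_def by simp
qed


lemma weyl_Suc: "n \<in> weyl (Suc k) \<Longrightarrow> n \<in> weyl k"
  by (auto simp: weyl_def)

lemma weyl_step: "n \<in> weyl k \<Longrightarrow> 1 \<le> i \<Longrightarrow> Suc i \<le> k \<Longrightarrow> n (Suc i) \<le> n i"
  by (auto simp: weyl_def)

lemma weyl_mono: assumes "n \<in> weyl k" "1 \<le> i" "i \<le> j" "j \<le> k" shows "n j \<le> n i"
  using assms(3,4)
proof (induction j rule: dec_induct)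
  case base then show ?case by simp
next
  case (step m)
  then have "n (Suc m) \<le> n m" using weyl_step[OF assms(1)] assms(2) by auto
  then show ?case using step by simp
qed

lemma size_Suc: "cluster_size (Suc k) n j = cluster_size k n j + (if n (Suc k) = n j then 1 else 0)"
proof -
  have "{m\<in>{1..Suc k}. n m = n j} = {m\<in>{1..k}. n m = n j} \<union> (if n (Suc k) = n j then {Suc k} else {})"
    by (auto simp: le_Suc_eq)
  then show ?thesis unfolding cluster_size_def by (auto simp: card_insert_if)
qed

lemma firsts_Suc: "cluster_firsts (Suc k) n = cluster_firsts k n \<union> (if k = 0 \<or> n k \<noteq> n (Suc k) then {Suc k} else {})"
  unfolding cluster_firsts_def by (auto simp: le_Suc_eq)

lemma lasts_Suc:
  assumes "1 \<le> k"
  shows "cluster_lasts (Suc k) n = (cluster_lasts k n - (if n (Suc k) = n k then {k} else {})) \<union> {Suc k}"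
  using assms unfolding cluster_lasts_def by (auto simp: le_Suc_eq)

lemma size_unchanged:
  assumes "n \<in> weyl (Suc k)" "j \<in> {1..k}" "n (Suc k) \<noteq> n k"
  shows "cluster_size (Suc k) n j = cluster_size k n j"
proof -
  have "n (Suc k) \<le> n k" using weyl_step[OF assms(1)] assms(2) by auto
  moreover have "n k \<le> n j" using weyl_mono[of n "Suc k" j k] assms by auto
  ultimately have "n (Suc k) \<noteq> n j" using assms(3) by auto
  then show ?thesis by (simp add: size_Suc)
qed

lemma size_last_new:
  assumes "n \<in> weyl (Suc k)" "n (Suc k) \<noteq> n k"
  shows "cluster_size (Suc k) n (Suc k) = 1"
proof -
  have H: "m = Suc k" if m: "1 \<le> m" "m \<le> Suc k" "n m = n (Suc k)" for m
  proof (rule ccontr)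
    assume "m \<noteq> Suc k"
    then have "m \<le> k" using m by simp
    then have "n k \<le> n m" using weyl_mono[OF assms(1) m(1)] by simp
    moreover have "n (Suc k) \<le> n k" using weyl_step[OF assms(1), of k] \<open>m \<le> k\<close> m by simp
    ultimately show False using m(3) assms(2) by simp
  qed
  have "{m\<in>{1..Suc k}. n m = n (Suc k)} = {Suc k}" using H by auto
  then show ?thesis unfolding cluster_size_def by simp
qed

lemma aux_lin:
  fixes x X A b S S' ak :: complex
  assumes "S = (1 - X) * ak + S'" "(1 - x) * A = S" "ak = x * b"
  shows "(1 - x) * (A + b) = (1 - X * x) * b + S'"
proof -
  have "(1 - x) * (A + b) = (1 - x) * A + (1 - x) * b" by (simp add: algebra_simps)
  also have "\<dots> = (1 - X) * (x * b) + S' + (1 - x) * b" using assms by simp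
  also have "\<dots> = (1 - X * x) * b + S'" by (simp add: algebra_simps)
  finally show ?thesis .
qed

lemma lasts_sum:
  fixes x :: complex
  assumes "n \<in> weyl k" "\<forall>i\<in>{1..<k}. n i = n (Suc i) \<longrightarrow> a i = x * a (Suc i)"
  shows "(1 - x) * (\<Sum>i=1..k. a i) = (\<Sum>j\<in>cluster_lasts k n. (1 - x ^ cluster_size k n j) * a j)"
  using assms
proof (induction k)
  case 0
  then show ?case by (simp add: cluster_lasts_def)
next
  case (Suc k)
  have IH: "(1 - x) * (\<Sum>i=1..k. a i) = (\<Sum>j\<in>cluster_lasts k n. (1 - x ^ cluster_size k n j) * a j)"
    using Suc weyl_Suc by auto
  show ?case
  proof (cases "k = 0")
    case True
    have "cluster_lasts (Suc k) n = {1}" using True by (auto simp: cluster_lasts_def)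
    moreover have "cluster_size (Suc k) n 1 = 1"
    proof -
      have "{m\<in>{1..Suc k}. n m = n 1} = {1}" using True by auto
      then show ?thesis by (simp add: cluster_size_def)
    qed
    ultimately show ?thesis using True by simp
  next
    case False
    then have k1: "1 \<le> k" by simp
    have fin: "finite (cluster_lasts k n)" by (simp add: cluster_lasts_def)
    have nl: "Suc k \<notin> cluster_lasts k n" by (simp add: cluster_lasts_def)
    have kin: "k \<in> cluster_lasts k n" using k1 by (simp add: cluster_lasts_def)
    have sumS: "(\<Sum>i=1..Suc k. a i) = (\<Sum>i=1..k. a i) + a (Suc k)" by simp
    show ?thesis
    proof (cases "n (Suc k) = n k")
      case False
      have L: "cluster_lasts (Suc k) n = insert (Suc k) (cluster_lasts k n)"
        using lasts_Suc[OF k1, of n] False by auto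
      have "(\<Sum>j\<in>cluster_lasts k n. (1 - x ^ cluster_size (Suc k) n j) * a j) = (\<Sum>j\<in>cluster_lasts k n. (1 - x ^ cluster_size k n j) * a j)"
        by (rule sum.cong[OF refl]) (use size_unchanged[OF Suc.prems(1) _ False] in \<open>auto simp: cluster_lasts_def\<close>)
      then show ?thesis unfolding L sum.insert[OF fin nl] sumS
        using IH size_last_new[OF Suc.prems(1) False] by (simp add: algebra_simps)
    next
      case True
      have L: "cluster_lasts (Suc k) n = insert (Suc k) (cluster_lasts k n - {k})"
        using lasts_Suc[OF k1, of n] True by auto
      have fin2: "finite (cluster_lasts k n - {k})" using fin by simp
      have nl2: "Suc k \<notin> cluster_lasts k n - {k}" using nl by simp
      have eq: "(\<Sum>j\<in>cluster_lasts k n - {k}. (1 - x ^ cluster_size (Suc k) n j) * a j) = (\<Sum>j\<in>cluster_lasts k n - {k}. (1 - x ^ cluster_size k n j) * a j)"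
      proof (rule sum.cong[OF refl])
        fix j assume j: "j \<in> cluster_lasts k n - {k}"
        then have j1: "1 \<le> j" "j < k" "n (Suc j) \<noteq> n j" by (auto simp: cluster_lasts_def)
        have "n (Suc j) \<le> n j" using weyl_step[OF Suc.prems(1)] j1 by simp
        moreover have "n (Suc k) \<le> n (Suc j)" using weyl_mono[OF Suc.prems(1), of "Suc j" "Suc k"] j1 by simp
        ultimately have "n (Suc k) \<noteq> n j" using j1 by simp
        then show "(1 - x ^ cluster_size (Suc k) n j) * a j = (1 - x ^ cluster_size k n j) * a j"
          by (simp add: size_Suc)
      qed
      have cs: "cluster_size (Suc k) n (Suc k) = cluster_size k n k + 1"
      proof -
        have "cluster_size k n (Suc k) = cluster_size k n k" unfolding cluster_size_def using True by simp
        then show ?thesis by (simp add: size_Suc)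
      qed
      have ak: "a k = x * a (Suc k)" using Suc.prems(2) True k1 by auto
      have "(\<Sum>j\<in>cluster_lasts k n. (1 - x ^ cluster_size k n j) * a j)
          = (1 - x ^ cluster_size k n k) * a k + (\<Sum>j\<in>cluster_lasts k n - {k}. (1 - x ^ cluster_size k n j) * a j)"
        by (rule sum.remove[OF fin kin])
      then show ?thesis unfolding L sum.insert[OF fin2 nl2] sumS eq cs power_add power_one_right
        by (rule aux_lin[OF _ IH ak])
    qed
  qed
qed

lemma first_of_last:
  assumes "n \<in> weyl k" "1 \<le> k"
  obtains j0 where "j0 \<in> cluster_firsts k n" "n j0 = n k" "1 \<le> j0" "j0 \<le> k"
    "\<forall>m\<in>{j0..k}. n m = n k" "\<forall>j\<in>cluster_firsts k n. n j = n k \<longrightarrow> j = j0"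
    "cluster_size k n j0 = Suc k - j0"
proof -
  define P where "P = (\<lambda>m. 1 \<le> m \<and> n m = n k)"
  define j0 where "j0 = (LEAST m. P m)"
  have Pk: "P k" using assms(2) by (simp add: P_def)
  have Pj0: "P j0" unfolding j0_def by (rule LeastI[of P k, OF Pk])
  have le: "j0 \<le> m" if "P m" for m unfolding j0_def by (rule Least_le[of P m, OF that])
  have j0k: "j0 \<le> k" using le[OF Pk] .
  have j01: "1 \<le> j0" "n j0 = n k" using Pj0 by (auto simp: P_def)
  have cont: "\<forall>m\<in>{j0..k}. n m = n k"
  proof
    fix m assume m: "m \<in> {j0..k}"
    have "n m \<le> n j0" using weyl_mono[OF assms(1) j01(1), of m] m by auto
    moreover have "n k \<le> n m" using weyl_mono[OF assms(1), of m k] m j01 by auto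
    ultimately show "n m = n k" using j01 by simp
  qed
  have first: "j0 \<in> cluster_firsts k n"
  proof -
    have "j0 = 1 \<or> n (j0 - 1) \<noteq> n j0"
    proof (rule ccontr)
      assume "\<not> (j0 = 1 \<or> n (j0 - 1) \<noteq> n j0)"
      then have "P (j0 - 1)" using j01 by (auto simp: P_def)
      then have "j0 \<le> j0 - 1" by (rule le)
      then show False using j01 \<open>\<not> _\<close> by auto
    qed
    then show ?thesis using j01 j0k by (auto simp: cluster_firsts_def)
  qed
  have uniq: "\<forall>j\<in>cluster_firsts k n. n j = n k \<longrightarrow> j = j0"
  proof (intro ballI impI)
    fix j assume j: "j \<in> cluster_firsts k n" "n j = n k"
    then have "P j" by (auto simp: P_def cluster_firsts_def)
    then have "j0 \<le> j" by (rule le)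
    show "j = j0"
    proof (rule ccontr)
      assume "j \<noteq> j0"
      then have "j0 \<le> j - 1" "j - 1 \<le> k" "j \<noteq> 1" using \<open>j0 \<le> j\<close> j j01 by (auto simp: cluster_firsts_def)
      then have "n (j - 1) = n k" using bspec[OF cont, of "j - 1"] by simp
      then show False using j \<open>j \<noteq> 1\<close> by (auto simp: cluster_firsts_def)
    qed
  qed
  have "{m\<in>{1..k}. n m = n j0} = {j0..k}"
  proof
    show "{m\<in>{1..k}. n m = n j0} \<subseteq> {j0..k}"
    proof
      fix m assume "m \<in> {m\<in>{1..k}. n m = n j0}"
      then have "P m" "m \<le> k" using j01 by (auto simp: P_def)
      then show "m \<in> {j0..k}" using le by auto
    qed
    show "{j0..k} \<subseteq> {m\<in>{1..k}. n m = n j0}"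
    proof
      fix m assume m: "m \<in> {j0..k}"
      have "n m = n k" using bspec[OF cont m] .
      then show "m \<in> {m\<in>{1..k}. n m = n j0}" using m j01 by auto
    qed
  qed
  then have "cluster_size k n j0 = Suc k - j0" by (simp add: cluster_size_def)
  then show ?thesis using that first j01 j0k cont uniq by blast
qed

lemma aux_lin2:
  fixes x X A b S S' a0 :: complex
  assumes "S = (1 - X) * a0 + S'" "(1 - x) * A = S" "b = X * a0"
  shows "(1 - x) * (A + b) = (1 - X * x) * a0 + S'"
proof -
  have "(1 - x) * (A + b) = (1 - x) * A + (1 - x) * b" by (simp add: algebra_simps)
  also have "\<dots> = (1 - X) * a0 + S' + (1 - x) * (X * a0)" using assms by simp
  also have "\<dots> = (1 - X * x) * a0 + S'" by (simp add: algebra_simps)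
  finally show ?thesis .
qed

lemma firsts_sum:
  fixes x :: complex
  assumes "n \<in> weyl k" "\<forall>i\<in>{1..<k}. n i = n (Suc i) \<longrightarrow> a (Suc i) = x * a i"
  shows "(1 - x) * (\<Sum>i=1..k. a i) = (\<Sum>j\<in>cluster_firsts k n. (1 - x ^ cluster_size k n j) * a j)"
  using assms
proof (induction k)
  case 0
  then show ?case by (simp add: cluster_firsts_def)
next
  case (Suc k)
  have IH: "(1 - x) * (\<Sum>i=1..k. a i) = (\<Sum>j\<in>cluster_firsts k n. (1 - x ^ cluster_size k n j) * a j)"
    using Suc weyl_Suc by auto
  have fin: "finite (cluster_firsts k n)" by (simp add: cluster_firsts_def)
  have nl: "Suc k \<notin> cluster_firsts k n" by (simp add: cluster_firsts_def)
  have sumS: "(\<Sum>i=1..Suc k. a i) = (\<Sum>i=1..k. a i) + a (Suc k)" by simp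
  show ?case
  proof (cases "k = 0")
    case True
    have "cluster_firsts (Suc k) n = {1}" using True by (auto simp: cluster_firsts_def)
    moreover have "cluster_size (Suc k) n 1 = 1"
    proof -
      have "{m\<in>{1..Suc k}. n m = n 1} = {1}" using True by auto
      then show ?thesis by (simp add: cluster_size_def)
    qed
    ultimately show ?thesis using True by simp
  next
    case False
    then have k1: "1 \<le> k" by simp
    show ?thesis
    proof (cases "n (Suc k) = n k")
      case False
      have L: "cluster_firsts (Suc k) n = insert (Suc k) (cluster_firsts k n)"
        using firsts_Suc[of k n] False by auto
      have "(\<Sum>j\<in>cluster_firsts k n. (1 - x ^ cluster_size (Suc k) n j) * a j) = (\<Sum>j\<in>cluster_firsts k n. (1 - x ^ cluster_size k n j) * a j)"
        by (rule sum.cong[OF refl]) (use size_unchanged[OF Suc.prems(1) _ False] in \<open>auto simp: cluster_firsts_def\<close>)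
      then show ?thesis unfolding L sum.insert[OF fin nl] sumS
        using IH size_last_new[OF Suc.prems(1) False] by (simp add: algebra_simps)
    next
      case True
      have L: "cluster_firsts (Suc k) n = cluster_firsts k n"
        using firsts_Suc[of k n] True k1 by auto
      have wk: "n \<in> weyl k" using Suc.prems(1) weyl_Suc by blast
      obtain j0 where j0: "j0 \<in> cluster_firsts k n" "n j0 = n k" "1 \<le> j0" "j0 \<le> k"
        "\<forall>m\<in>{j0..k}. n m = n k" "\<forall>j\<in>cluster_firsts k n. n j = n k \<longrightarrow> j = j0"
        "cluster_size k n j0 = Suc k - j0"
        using first_of_last[OF wk k1] by blast
      have chain: "a m = x ^ (m - j0) * a j0" if "j0 \<le> m" "m \<le> k" for m
        using that
      proof (induction m rule: dec_induct)
        case base then show ?case by simp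
      next
        case (step m)
        have mm: "m \<in> {j0..k}" "Suc m \<in> {j0..k}" using step by auto
        have "n m = n (Suc m)" using bspec[OF j0(5) mm(1)] bspec[OF j0(5) mm(2)] by simp
        moreover have "m \<in> {1..<Suc k}" using mm j0(3) by auto
        ultimately have "a (Suc m) = x * a m" using bspec[OF Suc.prems(2)] by blast
        then show ?case using step by (simp add: Suc_diff_le)
      qed
      have aSk: "a (Suc k) = x ^ (Suc k - j0) * a j0"
      proof -
        have "a (Suc k) = x * a k" using Suc.prems(2) True k1 by auto
        then show ?thesis using chain[of k] j0(4) by (simp add: Suc_diff_le)
      qed
      have fin2: "finite (cluster_firsts k n - {j0})" using fin by simp
      have eq: "(\<Sum>j\<in>cluster_firsts k n - {j0}. (1 - x ^ cluster_size (Suc k) n j) * a j) = (\<Sum>j\<in>cluster_firsts k n - {j0}. (1 - x ^ cluster_size k n j) * a j)"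
      proof (rule sum.cong[OF refl])
        fix j assume j: "j \<in> cluster_firsts k n - {j0}"
        then have "n j \<noteq> n (Suc k)" using j0(6) True by auto
        then show "(1 - x ^ cluster_size (Suc k) n j) * a j = (1 - x ^ cluster_size k n j) * a j"
          by (simp add: size_Suc)
      qed
      have cs: "cluster_size (Suc k) n j0 = (Suc k - j0) + 1" using j0(2) j0(7) True by (simp add: size_Suc)
      have r1: "(\<Sum>j\<in>cluster_firsts k n. (1 - x ^ cluster_size k n j) * a j)
          = (1 - x ^ (Suc k - j0)) * a j0 + (\<Sum>j\<in>cluster_firsts k n - {j0}. (1 - x ^ cluster_size k n j) * a j)"
        by (subst sum.remove[OF fin j0(1)]) (simp add: j0(7))
      have r2: "(\<Sum>j\<in>cluster_firsts k n. (1 - x ^ cluster_size (Suc k) n j) * a j)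
          = (1 - x ^ (Suc k - j0) * x) * a j0 + (\<Sum>j\<in>cluster_firsts k n - {j0}. (1 - x ^ cluster_size k n j) * a j)"
        by (subst sum.remove[OF fin j0(1)]) (simp add: cs eq power_add)
      show ?thesis unfolding L sumS r2
        by (rule aux_lin2[OF r1 IH aSk])
    qed
  qed
qed

definition sp :: "(nat \<Rightarrow> int) \<Rightarrow> nat \<Rightarrow> nat" where
  "sp n m = card {m'\<in>{1..m}. n m' = n m}"

definition qi :: "real \<Rightarrow> nat \<Rightarrow> real" where
  "qi q r = (1 - q ^ r) / (1 - q)"

lemma qfact_Suc: "qfact q (Suc c) = qfact q c * qi q (Suc c)"
  unfolding qfact_def qi_def by (simp add: prod.cl_ivl_Suc)

lemma qfact_1: "qfact q 1 = qi q 1"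
  unfolding qfact_def qi_def by simp

lemma qfact_Suc0: "qfact q (Suc 0) = qi q (Suc 0)"
  unfolding qfact_def qi_def by simp

lemma sp_last: "sp n k = cluster_size k n k"
  unfolding sp_def cluster_size_def ..

lemma firsts_prod:
  assumes "n \<in> weyl k"
  shows "(\<Prod>j\<in>cluster_firsts k n. qfact q (cluster_size k n j)) = (\<Prod>m=1..k. qi q (sp n m))"
  using assms
proof (induction k)
  case 0
  then show ?case by (simp add: cluster_firsts_def)
next
  case (Suc k)
  have IH: "(\<Prod>j\<in>cluster_firsts k n. qfact q (cluster_size k n j)) = (\<Prod>m=1..k. qi q (sp n m))"
    using Suc weyl_Suc by auto
  have fin: "finite (cluster_firsts k n)" by (simp add: cluster_firsts_def)
  have nl: "Suc k \<notin> cluster_firsts k n" by (simp add: cluster_firsts_def)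
  have prS: "(\<Prod>m=1..Suc k. qi q (sp n m)) = (\<Prod>m=1..k. qi q (sp n m)) * qi q (sp n (Suc k))"
    by (simp add: prod.cl_ivl_Suc)
  show ?case
  proof (cases "k = 0")
    case True
    have "cluster_firsts (Suc k) n = {1}" using True by (auto simp: cluster_firsts_def)
    moreover have "cluster_size (Suc k) n 1 = 1"
    proof -
      have "{m\<in>{1..Suc k}. n m = n 1} = {1}" using True by auto
      then show ?thesis by (simp add: cluster_size_def)
    qed
    ultimately show ?thesis using True by (simp add: qfact_def qi_def sp_last)
  next
    case False
    then have k1: "1 \<le> k" by simp
    show ?thesis
    proof (cases "n (Suc k) = n k")
      case False
      have L: "cluster_firsts (Suc k) n = insert (Suc k) (cluster_firsts k n)"
        using firsts_Suc[of k n] False by auto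
      have "(\<Prod>j\<in>cluster_firsts k n. qfact q (cluster_size (Suc k) n j)) = (\<Prod>j\<in>cluster_firsts k n. qfact q (cluster_size k n j))"
        by (rule prod.cong[OF refl]) (use size_unchanged[OF Suc.prems(1) _ False] in \<open>auto simp: cluster_firsts_def\<close>)
      then show ?thesis unfolding L prod.insert[OF fin nl] prS
        using IH size_last_new[OF Suc.prems(1) False] by (simp add: sp_last qfact_Suc0 mult.commute)
    next
      case True
      have L: "cluster_firsts (Suc k) n = cluster_firsts k n"
        using firsts_Suc[of k n] True k1 by auto
      have wk: "n \<in> weyl k" using Suc.prems(1) weyl_Suc by blast
      obtain j0 where j0: "j0 \<in> cluster_firsts k n" "n j0 = n k" "1 \<le> j0" "j0 \<le> k"
        "\<forall>m\<in>{j0..k}. n m = n k" "\<forall>j\<in>cluster_firsts k n. n j = n k \<longrightarrow> j = j0"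
        "cluster_size k n j0 = Suc k - j0"
        using first_of_last[OF wk k1] by blast
      have eq: "(\<Prod>j\<in>cluster_firsts k n - {j0}. qfact q (cluster_size (Suc k) n j)) = (\<Prod>j\<in>cluster_firsts k n - {j0}. qfact q (cluster_size k n j))"
      proof (rule prod.cong[OF refl])
        fix j assume j: "j \<in> cluster_firsts k n - {j0}"
        then have "n j \<noteq> n (Suc k)" using j0(6) True by auto
        then show "qfact q (cluster_size (Suc k) n j) = qfact q (cluster_size k n j)"
          by (simp add: size_Suc)
      qed
      have cs: "cluster_size (Suc k) n j0 = Suc (cluster_size k n j0)" using j0(2) True by (simp add: size_Suc)
      have spk: "sp n (Suc k) = Suc (cluster_size k n j0)"
      proof -
        have "cluster_size k n (Suc k) = cluster_size k n j0" unfolding cluster_size_def using True j0(2) by simp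
        then show ?thesis unfolding sp_last by (simp add: size_Suc)
      qed
      have r1: "(\<Prod>j\<in>cluster_firsts k n. qfact q (cluster_size k n j))
          = qfact q (cluster_size k n j0) * (\<Prod>j\<in>cluster_firsts k n - {j0}. qfact q (cluster_size k n j))"
        by (subst prod.remove[OF fin j0(1)]) simp
      have r2: "(\<Prod>j\<in>cluster_firsts k n. qfact q (cluster_size (Suc k) n j))
          = qfact q (cluster_size k n j0) * qi q (sp n (Suc k)) * (\<Prod>j\<in>cluster_firsts k n - {j0}. qfact q (cluster_size k n j))"
        by (subst prod.remove[OF fin j0(1)]) (simp add: cs eq spk qfact_Suc)
      show ?thesis unfolding L r2 prS IH[symmetric] r1 by (simp add: mult_ac)
    qed
  qed
qed

lemma ratio_aux:
  assumes "n \<in> weyl K" "1 \<le> j" "j \<le> k" "k \<le> K"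
  shows "(\<Prod>m=1..k. qi q (sp n m)) * qi q (sp (n(j := n j + 1)) j)
       = qi q (card {m\<in>{1..k}. n m = n j}) * (\<Prod>m=1..k. qi q (sp (n(j := n j + 1)) m))"
  using assms(3)
proof (induction k rule: dec_induct)
  case base
  define n' where "n' = n(j := n j + 1)"
  obtain j' where j': "j = Suc j'" using assms(2) by (cases j) auto
  have same: "(\<Prod>m=1..j'. qi q (sp n m)) = (\<Prod>m=1..j'. qi q (sp n' m))"
  proof (rule prod.cong[OF refl])
    fix m assume m: "m \<in> {1..j'}"
    have "{m'\<in>{1..m}. n m' = n m} = {m'\<in>{1..m}. n' m' = n' m}" using m j' by (auto simp: n'_def)
    then show "qi q (sp n m) = qi q (sp n' m)" by (simp add: sp_def)
  qed
  have p1: "(\<Prod>m=1..j. qi q (sp n m)) = (\<Prod>m=1..j'. qi q (sp n m)) * qi q (sp n j)"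
    unfolding j' by (rule prod.cl_ivl_Suc[THEN trans]) simp
  have p2: "(\<Prod>m=1..j. qi q (sp n' m)) = (\<Prod>m=1..j'. qi q (sp n' m)) * qi q (sp n' j)"
    unfolding j' by (rule prod.cl_ivl_Suc[THEN trans]) simp
  have c: "sp n j = card {m\<in>{1..j}. n m = n j}" by (simp add: sp_def)
  show ?case unfolding n'_def[symmetric] p1 p2 same c by (simp only: mult_ac)
next
  case (step t)
  define n' where "n' = n(j := n j + 1)"
  have jk: "j \<noteq> Suc t" using step by simp
  have le: "n (Suc t) \<le> n j" using weyl_mono[OF assms(1) assms(2), of "Suc t"] step assms(4) by simp
  have prn: "(\<Prod>m=1..Suc t. qi q (sp n m)) = (\<Prod>m=1..t. qi q (sp n m)) * qi q (sp n (Suc t))"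
    by (simp add: prod.cl_ivl_Suc)
  have prn': "(\<Prod>m=1..Suc t. qi q (sp n' m)) = (\<Prod>m=1..t. qi q (sp n' m)) * qi q (sp n' (Suc t))"
    by (simp add: prod.cl_ivl_Suc)
  have IH: "(\<Prod>m=1..t. qi q (sp n m)) * qi q (sp n' j) = qi q (card {m\<in>{1..t}. n m = n j}) * (\<Prod>m=1..t. qi q (sp n' m))"
    using step.IH unfolding n'_def .
  have cS: "card {m\<in>{1..Suc t}. n m = n j} = card {m\<in>{1..t}. n m = n j} + (if n (Suc t) = n j then 1 else 0)"
    using size_Suc[of t n j] unfolding cluster_size_def .
  show ?case unfolding n'_def[symmetric]
  proof (cases "n (Suc t) = n j")
    case True
    have s1: "sp n (Suc t) = card {m\<in>{1..t}. n m = n j} + 1"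
      using cS True by (simp add: sp_def)
    have "{m'\<in>{1..Suc t}. n' m' = n' (Suc t)} = {m'\<in>{1..Suc t}. n m' = n j} - {j}"
      using True jk by (auto simp: n'_def)
    moreover have "j \<in> {m'\<in>{1..Suc t}. n m' = n j}" using step assms(2) by auto
    moreover have "card {m'\<in>{1..Suc t}. n m' = n j} = card {m\<in>{1..t}. n m = n j} + 1" using cS True by simp
    ultimately have s2: "sp n' (Suc t) = card {m\<in>{1..t}. n m = n j}"
      by (simp add: sp_def)
    show "(\<Prod>m=1..Suc t. qi q (sp n m)) * qi q (sp n' j) = qi q (card {m\<in>{1..Suc t}. n m = n j}) * (\<Prod>m=1..Suc t. qi q (sp n' m))"
      unfolding prn prn' s1 s2 cS using IH True by (simp add: mult_ac)
  next
    case False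
    have "{m'\<in>{1..Suc t}. n' m' = n' (Suc t)} = {m'\<in>{1..Suc t}. n m' = n (Suc t)}"
      using False jk le by (auto simp: n'_def)
    then have s2: "sp n' (Suc t) = sp n (Suc t)" by (simp add: sp_def)
    show "(\<Prod>m=1..Suc t. qi q (sp n m)) * qi q (sp n' j) = qi q (card {m\<in>{1..Suc t}. n m = n j}) * (\<Prod>m=1..Suc t. qi q (sp n' m))"
      unfolding prn prn' s2 cS using IH False by (simp add: mult_ac)
  qed
qed

lemma ratio:
  assumes "n \<in> weyl K" "j \<in> cluster_firsts K n"
  shows "(\<Prod>m=1..K. qi q (sp n m)) * qi q (sp (n(j := n j + 1)) j)
       = qi q (cluster_size K n j) * (\<Prod>m=1..K. qi q (sp (n(j := n j + 1)) m))"
  using ratio_aux[OF assms(1), of j K] assms(2) unfolding cluster_size_def by (auto simp: cluster_firsts_def)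

lemma first_gap:
  assumes "n \<in> weyl K" "j \<in> cluster_firsts K n" "j \<noteq> 1"
  shows "n j < n (j - 1)"
proof -
  have "n j \<le> n (j - 1)" using weyl_step[OF assms(1), of "j - 1"] assms by (auto simp: cluster_firsts_def)
  then show ?thesis using assms(2,3) by (auto simp: cluster_firsts_def)
qed

lemma weyl_bump:
  assumes "n \<in> weyl K" "j \<in> cluster_firsts K n"
  shows "n(j := n j + 1) \<in> weyl K"
  unfolding weyl_def mem_Collect_eq
proof (intro ballI)
  fix i assume i: "i \<in> {1..<K}"
  have a: "n (i + 1) \<le> n i" using assms(1) i by (auto simp: weyl_def)
  have b: "n j + 1 \<le> n i" if "i + 1 = j"
    using first_gap[OF assms] that i by auto
  show "(n(j := n j + 1)) (i + 1) \<le> (n(j := n j + 1)) i"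
    using a b by auto
qed

lemma coef_sp:
  fixes q :: real
  assumes "n \<in> weyl K" "j \<in> cluster_firsts K n"
  shows "(if j \<noteq> 1 \<and> n (j - 1) - n j = 1 then 1 - q ^ (cluster_size K n (j - 1) + 1) else 1 - q)
       = 1 - q ^ sp (n(j := n j + 1)) j"
proof -
  define n' where "n' = n(j := n j + 1)"
  have j1: "1 \<le> j" "j \<le> K" using assms(2) by (auto simp: cluster_firsts_def)
  have spj: "sp n' j = card {m\<in>{1..j - 1}. n m = n j + 1} + 1"
  proof -
    have "{m'\<in>{1..j}. n' m' = n' j} = insert j {m\<in>{1..j - 1}. n m = n j + 1}"
      using j1 by (auto simp: n'_def)
    then show ?thesis by (simp add: sp_def)
  qed
  show ?thesis
  proof (cases "j \<noteq> 1 \<and> n (j - 1) - n j = 1")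
    case True
    have "{m\<in>{1..j - 1}. n m = n j + 1} = {m\<in>{1..K}. n m = n (j - 1)}"
    proof
      show "{m\<in>{1..j - 1}. n m = n j + 1} \<subseteq> {m\<in>{1..K}. n m = n (j - 1)}" using True j1 by auto
      show "{m\<in>{1..K}. n m = n (j - 1)} \<subseteq> {m\<in>{1..j - 1}. n m = n j + 1}"
      proof
        fix m assume m: "m \<in> {m\<in>{1..K}. n m = n (j - 1)}"
        have "m \<le> j - 1"
        proof (rule ccontr)
          assume "\<not> m \<le> j - 1"
          then have "n m \<le> n j" using weyl_mono[OF assms(1) j1(1), of m] m by auto
          then show False using m True by auto
        qed
        then show "m \<in> {m\<in>{1..j - 1}. n m = n j + 1}" using m True by auto
      qed
    qed
    then have "sp n' j = cluster_size K n (j - 1) + 1" using spj by (simp add: cluster_size_def)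
    then show ?thesis using True by (simp add: n'_def)
  next
    case False
    have "{m\<in>{1..j - 1}. n m = n j + 1} = {}"
    proof (cases "j = 1")
      case True then show ?thesis by auto
    next
      case ne: False
      have gap: "n j + 1 < n (j - 1)" using first_gap[OF assms ne] False ne by auto
      have "n m \<noteq> n j + 1" if "m \<in> {1..j - 1}" for m
      proof -
        have "n (j - 1) \<le> n m" by (rule weyl_mono[OF assms(1)]) (use that j1 in auto)
        then show ?thesis using gap by simp
      qed
      then show ?thesis by auto
    qed
    then have "sp (n(j := n j + 1)) j = 1" using spj by (simp add: n'_def)
    then show ?thesis by (subst if_not_P[OF False]) simp
  qed
qed


lemma proj_tendsto: "((\<lambda>w. w j) \<longlongrightarrow> (z::nat\<Rightarrow>complex) j) (at z within S)"
  using pf_tendsto[OF pf_var tendsto_ident_at] .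

lemma sum_tendsto: "((\<lambda>w. \<Sum>j=1..k. w j) \<longlongrightarrow> (\<Sum>j=1..k. (z::nat\<Rightarrow>complex) j)) (at z within S)"
  by (intro tendsto_sum proj_tendsto)

lemma phi_bwd:
  fixes q :: complex
  shows "\<forall>a b. a \<noteq> b \<longrightarrow> (a - q*b)/(a - b) * (q * a - b) + (b - q*a)/(b - a) * (q * b - a) = 0"
proof (intro allI impI)
  fix a b :: complex assume ab: "a \<noteq> b"
  then have "a - b \<noteq> 0" "b - a \<noteq> 0" by auto
  then show "(a - q*b)/(a - b) * (q * a - b) + (b - q*a)/(b - a) * (q * b - a) = 0"
    by (simp add: field_simps)
qed

lemma phi_fwd:
  fixes q :: complex
  assumes "q \<noteq> 0"
  shows "\<forall>a b. a \<noteq> b \<longrightarrow> (a - inverse q*b)/(a - b) * (a - q * b) + (b - inverse q*a)/(b - a) * (b - q * a) = 0"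
proof (intro allI impI)
  fix a b :: complex assume ab: "a \<noteq> b"
  then have "a - b \<noteq> 0" "b - a \<noteq> 0" by auto
  then show "(a - inverse q*b)/(a - b) * (a - q * b) + (b - inverse q*a)/(b - a) * (b - q * a) = 0"
    using assms by (simp add: field_simps)
qed

lemma pair_w:
  assumes w: "\<forall>i\<in>{1..k}. w i \<noteq> 1" and i: "i \<in> {1..k}" "i' \<in> {1..k}" and ed: "e * d = 1"
  shows "\<alpha> * (sym_expr k p e w (n(i := n i + d)) - sym_expr k p e w n)
       + \<beta> * (sym_expr k p e w (n(i' := n i' + d)) - sym_expr k p e w n)
       = (\<Sum>\<sigma> | \<sigma> permutes {1..k}. cc k p w \<sigma> * XX k e w \<sigma> n * (- (\<alpha> * w (\<sigma> i)) - \<beta> * w (\<sigma> i')))"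
proof -
  have ed2: "d * e = 1" using ed by (simp add: mult.commute)
  have "\<alpha> * (sym_expr k p e w (n(i := n i + d)) - sym_expr k p e w n)
       + \<beta> * (sym_expr k p e w (n(i' := n i' + d)) - sym_expr k p e w n)
     = \<alpha> * (\<Sum>\<sigma> | \<sigma> permutes {1..k}. cc k p w \<sigma> * XX k e w \<sigma> n * (1 - w (\<sigma> i)) - cc k p w \<sigma> * XX k e w \<sigma> n)
       + \<beta> * (\<Sum>\<sigma> | \<sigma> permutes {1..k}. cc k p w \<sigma> * XX k e w \<sigma> n * (1 - w (\<sigma> i')) - cc k p w \<sigma> * XX k e w \<sigma> n)"
    unfolding sym_shift[OF w i(1)] sym_shift[OF w i(2)] ed sum_subtractf by (simp add: sym_cc)
  also have "\<dots> = (\<Sum>\<sigma> | \<sigma> permutes {1..k}. \<alpha> * (cc k p w \<sigma> * XX k e w \<sigma> n * (1 - w (\<sigma> i)) - cc k p w \<sigma> * XX k e w \<sigma> n)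
       + \<beta> * (cc k p w \<sigma> * XX k e w \<sigma> n * (1 - w (\<sigma> i')) - cc k p w \<sigma> * XX k e w \<sigma> n))"
    by (simp add: sum_distrib_left sum.distrib)
  also have "\<dots> = (\<Sum>\<sigma> | \<sigma> permutes {1..k}. cc k p w \<sigma> * XX k e w \<sigma> n * (- (\<alpha> * w (\<sigma> i)) - \<beta> * w (\<sigma> i')))"
    by (rule sum.cong[OF refl]) (simp add: algebra_simps)
  finally show ?thesis .
qed

context
  fixes k :: nat and q :: real and z :: "nat \<Rightarrow> complex"
  assumes k1: "1 \<le> k" and q0: "0 < q" and q1: "q < 1" and z1: "\<forall>i\<in>{1..k}. z i \<noteq> 1"
begin

lemma Fnb: "at z within gen_domain k z \<noteq> bot" using nontriv[OF k1 z1] .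

lemma Tl: "((\<lambda>w. sym_expr k (of_real q) (-1) w n) \<longlongrightarrow> Psi_l k q z n) (at z within gen_domain k z)"
  unfolding Psi_l_def by (rule sym_tendsto[OF k1 z1])

lemma Tc: "((\<lambda>w. sym_expr k (of_real (inverse q)) 1 w n) \<longlongrightarrow> Psi_cfwd k q z n) (at z within gen_domain k z)"
  unfolding Psi_cfwd_def by (rule sym_tendsto[OF k1 z1])

lemma C1: "of_real (1 - q) * (\<Sum>i=1..k. nabla_bwd i (Psi_l k q z) n)
            = of_real (q - 1) * (\<Sum>j=1..k. z j) * Psi_l k q z n"
proof (rule lim_eq[OF Fnb])
  show "((\<lambda>w. of_real (1 - q) * (\<Sum>i=1..k. sym_expr k (of_real q) (-1) w (n(i := n i - 1)) - sym_expr k (of_real q) (-1) w n))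
     \<longlongrightarrow> of_real (1 - q) * (\<Sum>i=1..k. nabla_bwd i (Psi_l k q z) n)) (at z within gen_domain k z)"
    unfolding nabla_bwd_def by (intro tendsto_mult tendsto_const tendsto_sum tendsto_diff Tl)
  show "((\<lambda>w. of_real (q - 1) * (\<Sum>j=1..k. w j) * sym_expr k (of_real q) (-1) w n)
     \<longlongrightarrow> of_real (q - 1) * (\<Sum>j=1..k. z j) * Psi_l k q z n) (at z within gen_domain k z)"
    by (intro tendsto_mult tendsto_const sum_tendsto Tl)
  have "of_real (1 - q) * (\<Sum>i=1..k. sym_expr k (of_real q) (-1) w (n(i := n i - 1)) - sym_expr k (of_real q) (-1) w n)
      = of_real (q - 1) * (\<Sum>j=1..k. w j) * sym_expr k (of_real q) (-1) w n" if "w \<in> gen_domain k z" for w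
  proof -
    have w: "\<forall>i\<in>{1..k}. w i \<noteq> 1" using gen_domainD[OF that] by blast
    have "(\<Sum>i=1..k. sym_expr k (of_real q) (-1) w (n(i := n i + -1)) - sym_expr k (of_real q) (-1) w n)
        = - (\<Sum>j=1..k. w j) * sym_expr k (of_real q) (-1) w n"
      by (rule bulk[OF w]) simp
    then show ?thesis by (simp add: algebra_simps)
  qed
  then show "eventually (\<lambda>w. of_real (1 - q) * (\<Sum>i=1..k. sym_expr k (of_real q) (-1) w (n(i := n i - 1)) - sym_expr k (of_real q) (-1) w n)
      = of_real (q - 1) * (\<Sum>j=1..k. w j) * sym_expr k (of_real q) (-1) w n) (at z within gen_domain k z)"
    unfolding eventually_at_filter by (intro always_eventually) auto
qed

lemma C4: "of_real (1 - q) * (\<Sum>i=1..k. nabla_fwd i (Psi_cfwd k q z) n)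
            = of_real (q - 1) * (\<Sum>j=1..k. z j) * Psi_cfwd k q z n"
proof (rule lim_eq[OF Fnb])
  show "((\<lambda>w. of_real (1 - q) * (\<Sum>i=1..k. sym_expr k (of_real (inverse q)) 1 w (n(i := n i + 1)) - sym_expr k (of_real (inverse q)) 1 w n))
     \<longlongrightarrow> of_real (1 - q) * (\<Sum>i=1..k. nabla_fwd i (Psi_cfwd k q z) n)) (at z within gen_domain k z)"
    unfolding nabla_fwd_def by (intro tendsto_mult tendsto_const tendsto_sum tendsto_diff Tc)
  show "((\<lambda>w. of_real (q - 1) * (\<Sum>j=1..k. w j) * sym_expr k (of_real (inverse q)) 1 w n)
     \<longlongrightarrow> of_real (q - 1) * (\<Sum>j=1..k. z j) * Psi_cfwd k q z n) (at z within gen_domain k z)"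
    by (intro tendsto_mult tendsto_const sum_tendsto Tc)
  have "of_real (1 - q) * (\<Sum>i=1..k. sym_expr k (of_real (inverse q)) 1 w (n(i := n i + 1)) - sym_expr k (of_real (inverse q)) 1 w n)
      = of_real (q - 1) * (\<Sum>j=1..k. w j) * sym_expr k (of_real (inverse q)) 1 w n" if "w \<in> gen_domain k z" for w
  proof -
    have w: "\<forall>i\<in>{1..k}. w i \<noteq> 1" using gen_domainD[OF that] by blast
    have "(\<Sum>i=1..k. sym_expr k (of_real (inverse q)) 1 w (n(i := n i + 1)) - sym_expr k (of_real (inverse q)) 1 w n)
        = - (\<Sum>j=1..k. w j) * sym_expr k (of_real (inverse q)) 1 w n"
      by (rule bulk[OF w]) simp
    then show ?thesis by (simp add: algebra_simps)
  qed
  then show "eventually (\<lambda>w. of_real (1 - q) * (\<Sum>i=1..k. sym_expr k (of_real (inverse q)) 1 w (n(i := n i + 1)) - sym_expr k (of_real (inverse q)) 1 w n)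
      = of_real (q - 1) * (\<Sum>j=1..k. w j) * sym_expr k (of_real (inverse q)) 1 w n) (at z within gen_domain k z)"
    unfolding eventually_at_filter by (intro always_eventually) auto
qed

lemma C2:
  assumes i: "i \<in> {1..<k}" and ni: "n i = n (i + 1)"
  shows "nabla_bwd i (Psi_l k q z) n - of_real q * nabla_bwd (i + 1) (Psi_l k q z) n = 0"
proof (rule lim_eq[OF Fnb])
  let ?s = "\<lambda>m w. sym_expr k (of_real q) (-1) w m"
  show "((\<lambda>w. 1 * (?s (n(i := n i + -1)) w - ?s n w) + (- of_real q) * (?s (n(Suc i := n (Suc i) + -1)) w - ?s n w))
     \<longlongrightarrow> nabla_bwd i (Psi_l k q z) n - of_real q * nabla_bwd (i + 1) (Psi_l k q z) n) (at z within gen_domain k z)"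
  proof -
    have "((\<lambda>w. 1 * (?s (n(i := n i + -1)) w - ?s n w) + (- of_real q) * (?s (n(Suc i := n (Suc i) + -1)) w - ?s n w))
     \<longlongrightarrow> 1 * (Psi_l k q z (n(i := n i + -1)) - Psi_l k q z n) + (- of_real q) * (Psi_l k q z (n(Suc i := n (Suc i) + -1)) - Psi_l k q z n)) (at z within gen_domain k z)"
      by (intro tendsto_add tendsto_mult tendsto_const tendsto_diff Tl)
    then show ?thesis by (simp add: nabla_bwd_def algebra_simps)
  qed
  show "((\<lambda>w. 0) \<longlongrightarrow> 0) (at z within gen_domain k z)" by simp
  have "1 * (?s (n(i := n i + -1)) w - ?s n w) + (- of_real q) * (?s (n(Suc i := n (Suc i) + -1)) w - ?s n w) = 0"
    if "w \<in> gen_domain k z" for w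
  proof -
    have w: "inj_on w {1..k}" "\<forall>i\<in>{1..k}. w i \<noteq> 1" using gen_domainD[OF that] by blast+
    have ii: "i \<in> {1..k}" "Suc i \<in> {1..k}" "1 \<le> i" "i < k" using i by auto
    have "1 * (?s (n(i := n i + -1)) w - ?s n w) + (- of_real q) * (?s (n(Suc i := n (Suc i) + -1)) w - ?s n w)
       = (\<Sum>\<sigma> | \<sigma> permutes {1..k}. cc k (of_real q) w \<sigma> * XX k (-1) w \<sigma> n * (- (1 * w (\<sigma> i)) - (- of_real q) * w (\<sigma> (Suc i))))"
      by (rule pair_w[OF w(2) ii(1,2)]) simp
    also have "\<dots> = (\<Sum>\<sigma> | \<sigma> permutes {1..k}. cc k (of_real q) w \<sigma> * XX k (-1) w \<sigma> n * (of_real q * w (\<sigma> (Suc i)) - w (\<sigma> i)))"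
      by (rule sum.cong[OF refl]) (simp add: algebra_simps)
    also have "\<dots> = 0"
      by (rule boundary[OF ii(3,4) _ w phi_bwd]) (use ni in simp)
    finally show ?thesis .
  qed
  then show "eventually (\<lambda>w. 1 * (?s (n(i := n i + -1)) w - ?s n w) + (- of_real q) * (?s (n(Suc i := n (Suc i) + -1)) w - ?s n w) = 0) (at z within gen_domain k z)"
    unfolding eventually_at_filter by (intro always_eventually) auto
qed

lemma C5:
  assumes i: "i \<in> {1..<k}" and ni: "n i = n (i + 1)"
  shows "of_real q * nabla_fwd i (Psi_cfwd k q z) n - nabla_fwd (i + 1) (Psi_cfwd k q z) n = 0"
proof (rule lim_eq[OF Fnb])
  let ?s = "\<lambda>m w. sym_expr k (of_real (inverse q)) 1 w m"
  show "((\<lambda>w. of_real q * (?s (n(i := n i + 1)) w - ?s n w) + (- 1) * (?s (n(Suc i := n (Suc i) + 1)) w - ?s n w))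
     \<longlongrightarrow> of_real q * nabla_fwd i (Psi_cfwd k q z) n - nabla_fwd (i + 1) (Psi_cfwd k q z) n) (at z within gen_domain k z)"
  proof -
    have "((\<lambda>w. of_real q * (?s (n(i := n i + 1)) w - ?s n w) + (- 1) * (?s (n(Suc i := n (Suc i) + 1)) w - ?s n w))
     \<longlongrightarrow> of_real q * (Psi_cfwd k q z (n(i := n i + 1)) - Psi_cfwd k q z n) + (- 1) * (Psi_cfwd k q z (n(Suc i := n (Suc i) + 1)) - Psi_cfwd k q z n)) (at z within gen_domain k z)"
      by (intro tendsto_add tendsto_mult tendsto_const tendsto_diff Tc)
    then show ?thesis by (simp add: nabla_fwd_def algebra_simps)
  qed
  show "((\<lambda>w. 0) \<longlongrightarrow> 0) (at z within gen_domain k z)" by simp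
  have "of_real q * (?s (n(i := n i + 1)) w - ?s n w) + (- 1) * (?s (n(Suc i := n (Suc i) + 1)) w - ?s n w) = 0"
    if "w \<in> gen_domain k z" for w
  proof -
    have w: "inj_on w {1..k}" "\<forall>i\<in>{1..k}. w i \<noteq> 1" using gen_domainD[OF that] by blast+
    have ii: "i \<in> {1..k}" "Suc i \<in> {1..k}" "1 \<le> i" "i < k" using i by auto
    have qq: "(of_real q :: complex) \<noteq> 0" using q0 by simp
    have "of_real q * (?s (n(i := n i + 1)) w - ?s n w) + (- 1) * (?s (n(Suc i := n (Suc i) + 1)) w - ?s n w)
       = (\<Sum>\<sigma> | \<sigma> permutes {1..k}. cc k (of_real (inverse q)) w \<sigma> * XX k 1 w \<sigma> n * (- (of_real q * w (\<sigma> i)) - (- 1) * w (\<sigma> (Suc i))))"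
      by (rule pair_w[OF w(2) ii(1,2)]) simp
    also have "\<dots> = (\<Sum>\<sigma> | \<sigma> permutes {1..k}. cc k (inverse (of_real q)) w \<sigma> * XX k 1 w \<sigma> n * (w (\<sigma> (Suc i)) - of_real q * w (\<sigma> i)))"
      by (rule sum.cong[OF refl]) (simp add: algebra_simps of_real_inverse)
    also have "\<dots> = 0"
      by (rule boundary[OF ii(3,4) _ w phi_fwd[OF qq]]) (use ni in simp)
    finally show ?thesis .
  qed
  then show "eventually (\<lambda>w. of_real q * (?s (n(i := n i + 1)) w - ?s n w) + (- 1) * (?s (n(Suc i := n (Suc i) + 1)) w - ?s n w) = 0) (at z within gen_domain k z)"
    unfolding eventually_at_filter by (intro always_eventually) auto
qed

lemma C3:
  assumes n: "n \<in> weyl k"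
  shows "H_bwd k q (Psi_l k q z) n = of_real (q - 1) * (\<Sum>j=1..k. z j) * Psi_l k q z n"
proof -
  define a where "a = (\<lambda>j. nabla_bwd j (Psi_l k q z) n)"
  have hyp: "\<forall>i\<in>{1..<k}. n i = n (Suc i) \<longrightarrow> a i = of_real q * a (Suc i)"
    using C2 unfolding a_def by fastforce
  have "H_bwd k q (Psi_l k q z) n = (\<Sum>j\<in>cluster_lasts k n. (1 - of_real q ^ cluster_size k n j) * a j)"
    unfolding H_bwd_def a_def nabla_bwd_def by simp
  also have "\<dots> = (1 - of_real q) * (\<Sum>i=1..k. a i)"
    using lasts_sum[OF n hyp] by simp
  also have "\<dots> = of_real (q - 1) * (\<Sum>j=1..k. z j) * Psi_l k q z n"
    using C1[of n] unfolding a_def by simp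
  finally show ?thesis .
qed

lemma qpow_ne1: "0 < j \<Longrightarrow> q ^ j \<noteq> 1"
  using power_less_one_iff[of q j] q0 q1 by auto

lemma qfact_nz: "qfact q c \<noteq> 0"
  unfolding qfact_def using q1 qpow_ne1 by (auto simp: prod_zero_iff)

lemma Cq_nz: "C_q k q m \<noteq> 0"
proof -
  have f: "finite (cluster_firsts k m)" by (simp add: cluster_firsts_def)
  have p: "(\<Prod>j\<in>cluster_firsts k m. qfact q (cluster_size k m j)) \<noteq> 0"
    using qfact_nz f by (simp add: prod_zero_iff)
  have "(-1::real) ^ k * (inverse q) ^ (k * (k - 1) div 2) * (\<Prod>j\<in>cluster_firsts k m. qfact q (cluster_size k m j)) \<noteq> 0"
    using p q0 by simp
  then show ?thesis unfolding C_q_def of_real_eq_0_iff .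
qed

lemma Cq_weyl: "m \<in> weyl k \<Longrightarrow> C_q k q m = of_real ((-1) ^ k * (inverse q) ^ (k * (k - 1) div 2) * (\<Prod>i=1..k. qi q (sp m i)))"
  unfolding C_q_def by (simp add: firsts_prod)

lemma ratioC:
  assumes n: "n \<in> weyl k" and j: "j \<in> cluster_firsts k n"
  shows "C_q k q n * of_real (if j \<noteq> 1 \<and> n (j - 1) - n j = 1 then 1 - q ^ (cluster_size k n (j - 1) + 1) else 1 - q)
         / C_q k q (n(j := n j + 1)) = of_real (1 - q ^ cluster_size k n j)"
proof -
  define n' where "n' = n(j := n j + 1)"
  define K0 where "K0 = (-1::real) ^ k * (inverse q) ^ (k * (k - 1) div 2)"
  define A where "A = (\<Prod>i=1..k. qi q (sp n i))"
  define A' where "A' = (\<Prod>i=1..k. qi q (sp n' i))"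
  have n': "n' \<in> weyl k" unfolding n'_def by (rule weyl_bump[OF n j])
  have C: "C_q k q n = of_real (K0 * A)" unfolding K0_def A_def using Cq_weyl[OF n] by simp
  have C': "C_q k q n' = of_real (K0 * A')" unfolding K0_def A'_def using Cq_weyl[OF n'] by simp
  have nz: "K0 * A' \<noteq> 0" using Cq_nz[of n'] C' by auto
  have coef: "(if j \<noteq> 1 \<and> n (j - 1) - n j = 1 then 1 - q ^ (cluster_size k n (j - 1) + 1) else 1 - q)
      = (1 - q) * qi q (sp n' j)"
    unfolding coef_sp[OF n j] n'_def qi_def using q1 by simp
  have rat: "A * qi q (sp n' j) = qi q (cluster_size k n j) * A'"
    unfolding A_def A'_def n'_def by (rule ratio[OF n j])
  have "K0 * A * ((1 - q) * qi q (sp n' j)) / (K0 * A') = 1 - q ^ cluster_size k n j"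
  proof -
    have "K0 * A * ((1 - q) * qi q (sp n' j)) = K0 * (1 - q) * (A * qi q (sp n' j))" by (simp only: mult_ac)
    also have "\<dots> = K0 * (1 - q) * (qi q (cluster_size k n j) * A')" using rat by simp
    also have "\<dots> = (1 - q) * qi q (cluster_size k n j) * (K0 * A')" by (simp only: mult_ac)
    finally have "K0 * A * ((1 - q) * qi q (sp n' j)) = (1 - q) * qi q (cluster_size k n j) * (K0 * A')" .
    then have "K0 * A * ((1 - q) * qi q (sp n' j)) / (K0 * A') = (1 - q) * qi q (cluster_size k n j) * (K0 * A') / (K0 * A')"
      by (rule arg_cong[where f="\<lambda>x. x / (K0 * A')"])
    also have "\<dots> = (1 - q) * qi q (cluster_size k n j)" by (rule nonzero_mult_div_cancel_right[OF nz])
    also have "\<dots> = 1 - q ^ cluster_size k n j" unfolding qi_def using q1 by simp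
    finally show ?thesis .
  qed
  then show ?thesis unfolding n'_def[symmetric] C C' coef
    by (simp only: of_real_mult[symmetric] of_real_divide[symmetric])
qed

lemma C6:
  assumes n: "n \<in> weyl k"
  shows "H_cfwd k q (Psi_cfwd k q z) n = of_real (q - 1) * (\<Sum>j=1..k. z j) * Psi_cfwd k q z n"
proof -
  define P where "P = Psi_cfwd k q z"
  define a where "a = (\<lambda>j. nabla_fwd j P n)"
  have hyp: "\<forall>i\<in>{1..<k}. n i = n (Suc i) \<longrightarrow> a (Suc i) = of_real q * a i"
    using C5 unfolding a_def P_def by fastforce
  have "H_cfwd k q P n = (\<Sum>j\<in>cluster_firsts k n. C_q k q n *
      (of_real (if j \<noteq> 1 \<and> n (j - 1) - n j = 1 then 1 - q ^ (cluster_size k n (j - 1) + 1) else 1 - q) * (P (n(j := n j + 1)) / C_q k q (n(j := n j + 1)))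
      - of_real (1 - q ^ cluster_size k n j) * (P n / C_q k q n)))"
    unfolding H_cfwd_def H_fwd_def by (simp add: sum_distrib_left)
  also have "\<dots> = (\<Sum>j\<in>cluster_firsts k n. (1 - of_real q ^ cluster_size k n j) * a j)"
  proof (rule sum.cong[OF refl])
    fix j assume j: "j \<in> cluster_firsts k n"
    define cf where "cf = (of_real (if j \<noteq> 1 \<and> n (j - 1) - n j = 1 then 1 - q ^ (cluster_size k n (j - 1) + 1) else 1 - q) :: complex)"
    have r: "C_q k q n * cf / C_q k q (n(j := n j + 1)) = of_real (1 - q ^ cluster_size k n j)"
      unfolding cf_def by (rule ratioC[OF n j])
    have "C_q k q n * (cf * (P (n(j := n j + 1)) / C_q k q (n(j := n j + 1))) - of_real (1 - q ^ cluster_size k n j) * (P n / C_q k q n))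
        = (C_q k q n * cf / C_q k q (n(j := n j + 1))) * P (n(j := n j + 1)) - of_real (1 - q ^ cluster_size k n j) * P n"
      using Cq_nz[of n] by (simp add: field_simps)
    also have "\<dots> = (1 - of_real q ^ cluster_size k n j) * a j"
      unfolding r a_def nabla_fwd_def by (simp add: algebra_simps)
    finally show "C_q k q n * (of_real (if j \<noteq> 1 \<and> n (j - 1) - n j = 1 then 1 - q ^ (cluster_size k n (j - 1) + 1) else 1 - q) * (P (n(j := n j + 1)) / C_q k q (n(j := n j + 1)))
      - of_real (1 - q ^ cluster_size k n j) * (P n / C_q k q n)) = (1 - of_real q ^ cluster_size k n j) * a j"
      unfolding cf_def .
  qed
  also have "\<dots> = (1 - of_real q) * (\<Sum>i=1..k. a i)"
    using firsts_sum[OF n hyp] by simp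
  also have "\<dots> = of_real (q - 1) * (\<Sum>j=1..k. z j) * P n"
    using C4[of n] unfolding a_def P_def by simp
  finally show ?thesis unfolding P_def .
qed

lemma C7:
  assumes n: "n \<in> weyl k"
  shows "H_fwd k q (Psi_r k q z) n = of_real (q - 1) * (\<Sum>j=1..k. z j) * Psi_r k q z n"
proof -
  have e: "Psi_r k q z = (\<lambda>m. Psi_cfwd k q z m / C_q k q m)" by (rule ext) (simp add: Psi_r_def)
  have "H_cfwd k q (Psi_cfwd k q z) n = C_q k q n * H_fwd k q (Psi_r k q z) n"
    unfolding H_cfwd_def e ..
  then have "H_fwd k q (Psi_r k q z) n = H_cfwd k q (Psi_cfwd k q z) n / C_q k q n"
    using Cq_nz[of n] by (simp add: field_simps)
  also have "\<dots> = of_real (q - 1) * (\<Sum>j=1..k. z j) * Psi_r k q z n"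
    unfolding C6[OF n] Psi_r_def by simp
  finally show ?thesis .
qed

end

theorem proposition2p10:
  fixes k :: nat and q :: real and z :: "nat \<Rightarrow> complex"
  assumes "1 \<le> k" and "0 < q" and "q < 1"
    and "\<forall>i\<in>{1..k}. z i \<noteq> 1"
  shows
    "(\<forall>n. of_real (1 - q) * (\<Sum>i=1..k. nabla_bwd i (Psi_l k q z) n)
            = of_real (q - 1) * (\<Sum>j=1..k. z j) * Psi_l k q z n)
   \<and> (\<forall>n. \<forall>i\<in>{1..<k}. n i = n (i + 1) \<longrightarrow>
            nabla_bwd i (Psi_l k q z) n - of_real q * nabla_bwd (i + 1) (Psi_l k q z) n = 0)
   \<and> (\<forall>n\<in>weyl k. H_bwd k q (Psi_l k q z) n
            = of_real (q - 1) * (\<Sum>j=1..k. z j) * Psi_l k q z n)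
   \<and> (\<forall>n. of_real (1 - q) * (\<Sum>i=1..k. nabla_fwd i (Psi_cfwd k q z) n)
            = of_real (q - 1) * (\<Sum>j=1..k. z j) * Psi_cfwd k q z n)
   \<and> (\<forall>n. \<forall>i\<in>{1..<k}. n i = n (i + 1) \<longrightarrow>
            of_real q * nabla_fwd i (Psi_cfwd k q z) n - nabla_fwd (i + 1) (Psi_cfwd k q z) n = 0)
   \<and> (\<forall>n\<in>weyl k. H_cfwd k q (Psi_cfwd k q z) n
            = of_real (q - 1) * (\<Sum>j=1..k. z j) * Psi_cfwd k q z n)
   \<and> (\<forall>n\<in>weyl k. H_fwd k q (Psi_r k q z) n
            = of_real (q - 1) * (\<Sum>j=1..k. z j) * Psi_r k q z n)"
proof (intro conjI)
  show "\<forall>n. of_real (1 - q) * (\<Sum>i=1..k. nabla_bwd i (Psi_l k q z) n)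
            = of_real (q - 1) * (\<Sum>j=1..k. z j) * Psi_l k q z n"
    by (intro allI C1[OF assms])
  show "\<forall>n. \<forall>i\<in>{1..<k}. n i = n (i + 1) \<longrightarrow>
            nabla_bwd i (Psi_l k q z) n - of_real q * nabla_bwd (i + 1) (Psi_l k q z) n = 0"
    by (intro allI ballI impI C2[OF assms])
  show "\<forall>n\<in>weyl k. H_bwd k q (Psi_l k q z) n
            = of_real (q - 1) * (\<Sum>j=1..k. z j) * Psi_l k q z n"
    by (intro ballI C3[OF assms])
  show "\<forall>n. of_real (1 - q) * (\<Sum>i=1..k. nabla_fwd i (Psi_cfwd k q z) n)
            = of_real (q - 1) * (\<Sum>j=1..k. z j) * Psi_cfwd k q z n"
    by (intro allI C4[OF assms])
  show "\<forall>n. \<forall>i\<in>{1..<k}. n i = n (i + 1) \<longrightarrow>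
            of_real q * nabla_fwd i (Psi_cfwd k q z) n - nabla_fwd (i + 1) (Psi_cfwd k q z) n = 0"
    by (intro allI ballI impI C5[OF assms])
  show "\<forall>n\<in>weyl k. H_cfwd k q (Psi_cfwd k q z) n
            = of_real (q - 1) * (\<Sum>j=1..k. z j) * Psi_cfwd k q z n"
    by (intro ballI C6[OF assms])
  show "\<forall>n\<in>weyl k. H_fwd k q (Psi_r k q z) n
            = of_real (q - 1) * (\<Sum>j=1..k. z j) * Psi_r k q z n"
    by (intro ballI C7[OF assms])
qed

end
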